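(* Let $A$ be a general event structure and let $\mathit{er}(A)=(P,\le_P,\mathrm{Con}_P,\equiv_P)$ be as defined in the context. Then the set of configurations of $(P,\le_P,\mathrm{Con}_P)$, ordered by inclusion, is order-isomorphic to the order of extremal realisations of $\mathcal{C}^\infty(A)$. Explicitly: an extremal realisation $\rho$ corresponds (up to isomorphism of realisations) to the configuration $\{p\in P \mid p\preceq\rho\}$ of $P$; conversely a configuration $x$ of $P$ corresponds to the extremal realisation with carrier $(x,\le_P\restriction x)$ and function $\max_A : x\to A$.
   Context: A general event structure is $(E,\mathrm{Con},\vdash)$ where $E$ is a set, $\mathrm{Con}$ is a nonempty family of finite subsets of $E$ closed under subsets, and $\vdash\subseteq \mathrm{Con}\times E$ satisfies: $Y\in\mathrm{Con}$, $X\subseteq Y$, $X\vdash e$ imply $Y\vdash e$. A configuration is a subset $x\subseteq E$ which is consistent (every finite subset lies in $\mathrm{Con}$) and secured (for every $e\in x$ there are $e_1,\dots,e_n\in x$ with $e_n=e$ and $\{e_1,\dots,e_{i-1}\}\vdash e_i$ for all $i\le n$). $\mathcal{C}^\infty(A)$ denotes the set of configurations of $A$. Causal realisations: Let $\mathcal A$ be a family of sets with underlying set $A=\bigcup\mathcal A$. A (causal) realisation of $\mathcal A$ is a partial order $(E,\le)$ (its carrier) in which $\{e'\mid e'\le e\}$ is finite for all $e$, with a function $\rho:E\to A$ such that $\rho x\in\mathcal A$ for every down-closed $x\subseteq E$. A map of realisations from $(E,\le),\rho$ to $(E',\le'),\rho'$ is a partial surjective function $f:E\rightharpoonup E'$ sending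 down-closed subsets to down-closed subsets with $\rho(e)=\rho'(f(e))$ whenever $f(e)$ is defined; write $\rho\succeq\rho'$ (equivalently $\rho'\preceq\rho$) if such a map exists. A map is total if $f$ is a total function. A realisation $\rho$ is extremal if every total map of realisations out of $\rho$ is an isomorphism of realisations. The order of extremal realisations has as elements isomorphism classes of extremal realisations, ordered by $\preceq$ between representatives. A realisation has a top element if its carrier has an element above all others. $\mathit{er}(A)$: $P$ consists of one chosen representative from each isomorphism class of extremal realisations of $\mathcal{C}^\infty(A)$ having a top element; for $p\in P$, $\max_A(p)\in A$ is the image under the realisation's function of its top element. $p\le_P p'$ iff $p\preceq p'$. A finite $X\subseteq P$ is in $\mathrm{Con}_P$ iff $\max_A[X]\in\mathcal{C}^\infty(A)$, where $[X]$ is the $\le_P$-down-closure of $X$. $p_1\equiv_P p_2$ iff $\max_A(p_1)=\max_A(p_2)$. A configuration of $(P,\le_P,\mathrm{Con}_P)$ is a down-closed subset all of whose finite subsets are in $\mathrm{Con}_P$. *)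

theory Defs
  imports Main
begin

text \<open>A general event structure (E, Con, entailment). Entailment is a predicate
  ent X e meaning X |- e.\<close>

definition ges :: "'a set \<Rightarrow> 'a set set \<Rightarrow> ('a set \<Rightarrow> 'a \<Rightarrow> bool) \<Rightarrow> bool" where
  "ges E Con ent \<longleftrightarrow>
     Con \<noteq> {} \<and>
     (\<forall>X\<in>Con. finite X \<and> X \<subseteq> E) \<and>
     (\<forall>X\<in>Con. \<forall>Y. Y \<subseteq> X \<longrightarrow> Y \<in> Con) \<and>
     (\<forall>X e. ent X e \<longrightarrow> X \<in> Con \<and> e \<in> E) \<and>
     (\<forall>X Y e. Y \<in> Con \<longrightarrow> X \<subseteq> Y \<longrightarrow> ent X e \<longrightarrow> ent Y e)"

definition configs :: "'a set \<Rightarrow> 'a set set \<Rightarrow> ('a set \<Rightarrow> 'a \<Rightarrow> bool) \<Rightarrow> 'a set set" where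
  "configs E Con ent =
     {x. (\<forall>F. finite F \<and> F \<subseteq> x \<longrightarrow> F \<in> Con) \<and>
         (\<forall>e\<in>x. \<exists>es. es \<noteq> [] \<and> last es = e \<and> set es \<subseteq> x \<and>
                   (\<forall>i<length es. ent (set (take i es)) (es ! i)))}"

text \<open>A candidate realisation: a carrier set, an order relation on it (only its
  values on the carrier matter) and a labelling function.\<close>

record ('e, 'a) real =
  carrier :: "'e set"
  rord :: "'e \<Rightarrow> 'e \<Rightarrow> bool"
  lab :: "'e \<Rightarrow> 'a"

definition down_closed :: "('e, 'a) real \<Rightarrow> 'e set \<Rightarrow> bool" where
  "down_closed R x \<longleftrightarrow> x \<subseteq> carrier R \<and>
     (\<forall>e\<in>x. \<forall>e'\<in>carrier R. rord R e' e \<longrightarrow> e' \<in> x)"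

definition is_realisation :: "'a set set \<Rightarrow> ('e, 'a) real \<Rightarrow> bool" where
  "is_realisation Fam R \<longleftrightarrow>
     (\<forall>e\<in>carrier R. rord R e e) \<and>
     (\<forall>e\<in>carrier R. \<forall>e'\<in>carrier R. rord R e e' \<and> rord R e' e \<longrightarrow> e = e') \<and>
     (\<forall>e1\<in>carrier R. \<forall>e2\<in>carrier R. \<forall>e3\<in>carrier R.
        rord R e1 e2 \<and> rord R e2 e3 \<longrightarrow> rord R e1 e3) \<and>
     (\<forall>e\<in>carrier R. finite {e'\<in>carrier R. rord R e' e}) \<and>
     (\<forall>e\<in>carrier R. lab R e \<in> \<Union>Fam) \<and>
     (\<forall>x. down_closed R x \<longrightarrow> lab R ` x \<in> Fam)"

definition rmap :: "'a set set \<Rightarrow> ('e, 'a) real \<Rightarrow> ('f, 'a) real \<Rightarrow> ('e \<Rightarrow> 'f option) \<Rightarrow> bool" where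
  "rmap Fam R R' f \<longleftrightarrow>
     is_realisation Fam R \<and> is_realisation Fam R' \<and>
     (\<forall>e. f e \<noteq> None \<longrightarrow> e \<in> carrier R) \<and>
     (\<forall>e e'. f e = Some e' \<longrightarrow> e' \<in> carrier R') \<and>
     (\<forall>e'\<in>carrier R'. \<exists>e\<in>carrier R. f e = Some e') \<and>
     (\<forall>x. down_closed R x \<longrightarrow> down_closed R' {e'. \<exists>e\<in>x. f e = Some e'}) \<and>
     (\<forall>e e'. f e = Some e' \<longrightarrow> lab R e = lab R' e')"

text \<open>rle Fam R R' means R \<preceq> R', i.e. there is a map of realisations from R' to R.\<close>

definition rle :: "'a set set \<Rightarrow> ('e, 'a) real \<Rightarrow> ('f, 'a) real \<Rightarrow> bool" where
  "rle Fam R R' \<longleftrightarrow> (\<exists>f. rmap Fam R' R f)"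

definition total_map :: "('e, 'a) real \<Rightarrow> ('e \<Rightarrow> 'f option) \<Rightarrow> bool" where
  "total_map R f \<longleftrightarrow> (\<forall>e\<in>carrier R. f e \<noteq> None)"

definition riso_fun :: "('e, 'a) real \<Rightarrow> ('f, 'a) real \<Rightarrow> ('e \<Rightarrow> 'f) \<Rightarrow> bool" where
  "riso_fun R R' g \<longleftrightarrow>
     bij_betw g (carrier R) (carrier R') \<and>
     (\<forall>e1\<in>carrier R. \<forall>e2\<in>carrier R. rord R e1 e2 \<longleftrightarrow> rord R' (g e1) (g e2)) \<and>
     (\<forall>e\<in>carrier R. lab R' (g e) = lab R e)"

definition riso :: "'a set set \<Rightarrow> ('e, 'a) real \<Rightarrow> ('f, 'a) real \<Rightarrow> bool" where
  "riso Fam R R' \<longleftrightarrow> is_realisation Fam R \<and> is_realisation Fam R' \<and> (\<exists>g. riso_fun R R' g)"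

definition iso_map :: "('e, 'a) real \<Rightarrow> ('f, 'a) real \<Rightarrow> ('e \<Rightarrow> 'f option) \<Rightarrow> bool" where
  "iso_map R R' f \<longleftrightarrow> (\<exists>g. (\<forall>e\<in>carrier R. f e = Some (g e)) \<and> riso_fun R R' g)"

text \<open>Since a total map is
  surjective, its target is isomorphic to a realisation whose carrier lives in
  the same type as that of R, so quantifying over such targets suffices.\<close>

definition extremal :: "'a set set \<Rightarrow> ('e, 'a) real \<Rightarrow> bool" where
  "extremal Fam R \<longleftrightarrow> is_realisation Fam R \<and>
     (\<forall>(R' :: ('e, 'a) real) f. rmap Fam R R' f \<and> total_map R f \<longrightarrow> iso_map R R' f)"

definition has_top :: "('e, 'a) real \<Rightarrow> bool" where
  "has_top R \<longleftrightarrow> (\<exists>t\<in>carrier R. \<forall>e\<in>carrier R. rord R e t)"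

definition maxA :: "('e, 'a) real \<Rightarrow> 'a" where
  "maxA R = lab R (THE t. t \<in> carrier R \<and> (\<forall>e\<in>carrier R. rord R e t))"

text \<open>P is a set of representatives (with carriers in nat; every finite
  realisation is isomorphic to one with carrier in nat) of the isomorphism classes
  of extremal realisations with a top element.\<close>

definition er_reps :: "'a set set \<Rightarrow> (nat, 'a) real set \<Rightarrow> bool" where
  "er_reps Fam P \<longleftrightarrow>
     (\<forall>p\<in>P. extremal Fam p \<and> has_top p) \<and>
     (\<forall>R :: (nat, 'a) real. extremal Fam R \<and> has_top R \<longrightarrow> (\<exists>!p. p \<in> P \<and> riso Fam R p))"

definition downP :: "'a set set \<Rightarrow> (nat, 'a) real set \<Rightarrow> (nat, 'a) real set \<Rightarrow> (nat, 'a) real set" where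
  "downP Fam P X = {p\<in>P. \<exists>q\<in>X. rle Fam p q}"

definition ConP :: "'a set set \<Rightarrow> (nat, 'a) real set \<Rightarrow> (nat, 'a) real set \<Rightarrow> bool" where
  "ConP Fam P X \<longleftrightarrow> finite X \<and> X \<subseteq> P \<and> maxA ` downP Fam P X \<in> Fam"

definition configsP :: "'a set set \<Rightarrow> (nat, 'a) real set \<Rightarrow> (nat, 'a) real set set" where
  "configsP Fam P = {x. x \<subseteq> P \<and> (\<forall>p\<in>x. \<forall>p'\<in>P. rle Fam p' p \<longrightarrow> p' \<in> x) \<and>
                        (\<forall>X. finite X \<and> X \<subseteq> x \<longrightarrow> ConP Fam P X)}"

definition real_of_config :: "'a set set \<Rightarrow> (nat, 'a) real set \<Rightarrow> ((nat, 'a) real, 'a) real" where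
  "real_of_config Fam x = \<lparr>carrier = x, rord = rle Fam, lab = maxA\<rparr>"

end

theory Submission
  imports Defs
begin


definition restr :: "('e,'a) real \<Rightarrow> 'e \<Rightarrow> ('e,'a) real" where
  "restr R e = R\<lparr>carrier := {u \<in> carrier R. rord R u e}\<rparr>"

lemma restr_simps[simp]: "carrier (restr R e) = {u \<in> carrier R. rord R u e}"
  "rord (restr R e) = rord R" "lab (restr R e) = lab R"
  by (simp_all add: restr_def)

lemma realD:
  assumes "is_realisation Fam R"
  shows "\<And>e. e\<in>carrier R \<Longrightarrow> rord R e e"
    "\<And>e e'. e\<in>carrier R \<Longrightarrow> e'\<in>carrier R \<Longrightarrow> rord R e e' \<Longrightarrow> rord R e' e \<Longrightarrow> e = e'"
    "\<And>e1 e2 e3. e1\<in>carrier R \<Longrightarrow> e2\<in>carrier R \<Longrightarrow> e3\<in>carrier R \<Longrightarrow> rord R e1 e2 \<Longrightarrow> rord R e2 e3 \<Longrightarrow> rord R e1 e3"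
    "\<And>e. e\<in>carrier R \<Longrightarrow> finite {e'\<in>carrier R. rord R e' e}"
    "\<And>e. e\<in>carrier R \<Longrightarrow> lab R e \<in> \<Union>Fam"
    "\<And>x. down_closed R x \<Longrightarrow> lab R ` x \<in> Fam"
  using assms unfolding is_realisation_def by blast+

lemma rmapD:
  assumes "rmap Fam R R' f"
  shows "is_realisation Fam R" "is_realisation Fam R'"
    "\<And>e. f e \<noteq> None \<Longrightarrow> e \<in> carrier R"
    "\<And>e e'. f e = Some e' \<Longrightarrow> e' \<in> carrier R'"
    "\<And>e'. e'\<in>carrier R' \<Longrightarrow> \<exists>e\<in>carrier R. f e = Some e'"
    "\<And>x. down_closed R x \<Longrightarrow> down_closed R' {e'. \<exists>e\<in>x. f e = Some e'}"
    "\<And>e e'. f e = Some e' \<Longrightarrow> lab R e = lab R' e'"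
  using assms unfolding rmap_def by blast+

lemma riso_funD:
  assumes "riso_fun R R' g"
  shows "bij_betw g (carrier R) (carrier R')"
    "\<And>e1 e2. e1\<in>carrier R \<Longrightarrow> e2\<in>carrier R \<Longrightarrow> rord R e1 e2 \<longleftrightarrow> rord R' (g e1) (g e2)"
    "\<And>e. e\<in>carrier R \<Longrightarrow> lab R' (g e) = lab R e"
  using assms unfolding riso_fun_def by blast+

lemma riso_fun_id: "riso_fun R R id"
  unfolding riso_fun_def by auto

lemma riso_fun_comp: "riso_fun A B g \<Longrightarrow> riso_fun B C h \<Longrightarrow> riso_fun A C (h \<circ> g)"
proof -
  assume g: "riso_fun A B g" and h: "riso_fun B C h"
  have gb: "bij_betw g (carrier A) (carrier B)" and hb: "bij_betw h (carrier B) (carrier C)"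
    using g h riso_funD by blast+
  have gi: "\<And>a. a \<in> carrier A \<Longrightarrow> g a \<in> carrier B" using gb bij_betwE by blast
  show ?thesis unfolding riso_fun_def
    using bij_betw_trans[OF gb hb] riso_funD(2,3)[OF g] riso_funD(2,3)[OF h] gi by auto
qed

lemma riso_fun_inv: assumes "riso_fun A B g" shows "riso_fun B A (inv_into (carrier A) g)"
proof -
  have b: "bij_betw g (carrier A) (carrier B)" using assms riso_funD by blast
  have bi: "bij_betw (inv_into (carrier A) g) (carrier B) (carrier A)" using b by (rule bij_betw_inv_into)
  have fi: "\<And>y. y \<in> carrier B \<Longrightarrow> g (inv_into (carrier A) g y) = y" using b
    by (meson bij_betw_inv_into_right)
  show ?thesis unfolding riso_fun_def
  proof (intro conjI ballI)
    fix e1 e2 assume "e1 \<in> carrier B" "e2 \<in> carrier B"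
    then show "rord B e1 e2 = rord A (inv_into (carrier A) g e1) (inv_into (carrier A) g e2)"
      using riso_funD(2)[OF assms] bi fi by (metis bij_betwE)
  next
    fix e assume "e \<in> carrier B"
    then show "lab A (inv_into (carrier A) g e) = lab B e"
      using riso_funD(3)[OF assms] bi fi by (metis bij_betwE)
  qed (fact bi)
qed

lemma dc_iso: assumes "riso_fun A B g" "down_closed A z" shows "down_closed B (g ` z)"
proof -
  have b: "bij_betw g (carrier A) (carrier B)" using assms riso_funD by blast
  have zA: "z \<subseteq> carrier A" and zd: "\<forall>e\<in>z. \<forall>e'\<in>carrier A. rord A e' e \<longrightarrow> e' \<in> z"
    using assms(2) unfolding down_closed_def by auto
  have 1: "g ` z \<subseteq> carrier B" using b zA by (metis bij_betw_def image_mono)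
  have 2: "e' \<in> g ` z" if h: "e \<in> g ` z" "e' \<in> carrier B" "rord B e' e" for e e'
  proof -
    obtain a where a: "a \<in> z" "e = g a" using h by auto
    obtain a' where a': "a' \<in> carrier A" "e' = g a'" using h(2) b by (metis bij_betw_def imageE)
    have "rord A a' a" using riso_funD(2)[OF assms(1)] a a' h zA by auto
    then show "e' \<in> g ` z" using zd a a' by auto
  qed
  show ?thesis unfolding down_closed_def using 1 2 by blast
qed

lemma real_iso: assumes "riso_fun A B g" "is_realisation Fam A" shows "is_realisation Fam B"
proof -
  have b: "bij_betw g (carrier A) (carrier B)" using assms riso_funD by blast
  note o = riso_funD(2)[OF assms(1)] and l = riso_funD(3)[OF assms(1)]
  have cb: "carrier B = g ` carrier A" using b by (simp add: bij_betw_def)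
  have inj: "inj_on g (carrier A)" using b by (simp add: bij_betw_def)
  note R = realD[OF assms(2)]
  show ?thesis unfolding is_realisation_def
  proof (intro conjI ballI allI impI)
    fix e assume "e \<in> carrier B" then show "rord B e e" using cb o R(1) by auto
  next
    fix e e' assume "e \<in> carrier B" "e' \<in> carrier B" "rord B e e' \<and> rord B e' e"
    then obtain a a' where "a \<in> carrier A" "a' \<in> carrier A" "e = g a" "e' = g a'" using cb by auto
    then show "e = e'" using o R(2) \<open>rord B e e' \<and> rord B e' e\<close> by metis
  next
    fix e1 e2 e3 assume "e1 \<in> carrier B" "e2 \<in> carrier B" "e3 \<in> carrier B" "rord B e1 e2 \<and> rord B e2 e3"
    then show "rord B e1 e3" using cb o R(3) by (smt (verit, best) imageE)
  next
    fix e assume "e \<in> carrier B"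
    then obtain a where a: "a \<in> carrier A" "e = g a" using cb by auto
    have "{e'\<in>carrier B. rord B e' e} = g ` {e'\<in>carrier A. rord A e' a}"
      using a cb o by auto
    then show "finite {e'\<in>carrier B. rord B e' e}" using R(4)[OF a(1)] by simp
  next
    fix e assume "e \<in> carrier B" then show "lab B e \<in> \<Union>Fam" using cb l R(5) by auto
  next
    fix x assume dx: "down_closed B x"
    define z where "z = {a \<in> carrier A. g a \<in> x}"
    have gi: "\<And>a. a \<in> carrier A \<Longrightarrow> g a \<in> carrier B" using cb by blast
    have "down_closed A z" using dx unfolding down_closed_def z_def using o gi by auto
    moreover have "x = g ` z" using dx cb unfolding down_closed_def z_def by auto
    moreover have "lab B ` g ` z = lab A ` z" using l unfolding z_def by force
    ultimately show "lab B ` x \<in> Fam" using R(6) by simp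
  qed
qed

lemma riso_refl: "is_realisation Fam R \<Longrightarrow> riso Fam R R"
  unfolding riso_def using riso_fun_id by blast

lemma riso_sym: "riso Fam A B \<Longrightarrow> riso Fam B A"
  unfolding riso_def using riso_fun_inv by blast

lemma riso_trans: "riso Fam A B \<Longrightarrow> riso Fam B C \<Longrightarrow> riso Fam A C"
  unfolding riso_def using riso_fun_comp by blast

lemma rmap_iso: assumes "riso_fun A B g" "is_realisation Fam A" "is_realisation Fam B"
  shows "rmap Fam A B (\<lambda>a. if a \<in> carrier A then Some (g a) else None)"
proof -
  have b: "bij_betw g (carrier A) (carrier B)" using assms riso_funD by blast
  have *: "\<And>x. down_closed A x \<Longrightarrow> {e'. \<exists>e\<in>x. (if e \<in> carrier A then Some (g e) else None) = Some e'} = g ` x"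
    unfolding down_closed_def by auto
  have s: "\<And>e'. e' \<in> carrier B \<Longrightarrow> \<exists>e\<in>carrier A. g e = e'" using b by (metis bij_betw_def imageE)
  have i: "\<And>e. e \<in> carrier A \<Longrightarrow> g e \<in> carrier B" using b by (auto simp: bij_betw_def)
  show ?thesis unfolding rmap_def using assms riso_funD(3)[OF assms(1)] dc_iso[OF assms(1)] * s i
    by (auto split: if_splits)
qed

lemma rle_trans: assumes "rle Fam A B" "rle Fam B C" shows "rle Fam A C"
proof -
  obtain f where f: "rmap Fam B A f" using assms unfolding rle_def by blast
  obtain g where g: "rmap Fam C B g" using assms unfolding rle_def by blast
  note F = rmapD[OF f] and G = rmapD[OF g]
  have "rmap Fam C A (\<lambda>c. Option.bind (g c) f)"
    unfolding rmap_def
  proof (intro conjI allI impI ballI)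
    fix x assume "down_closed C x"
    then have "down_closed A {e'. \<exists>e\<in>{e'. \<exists>e\<in>x. g e = Some e'}. f e = Some e'}"
      using F(6) G(6) by blast
    moreover have "{e'. \<exists>e\<in>{e'. \<exists>e\<in>x. g e = Some e'}. f e = Some e'} = {e'. \<exists>e\<in>x. Option.bind (g e) f = Some e'}"
      by (auto split: Option.bind_splits)
    ultimately show "down_closed A {e'. \<exists>e\<in>x. Option.bind (g e) f = Some e'}" by simp
  next
    fix e' assume "e' \<in> carrier A"
    then obtain b where "b \<in> carrier B" "f b = Some e'" using F(5) by blast
    moreover obtain c where "c \<in> carrier C" "g c = Some b" using G(5) calculation by blast
    ultimately show "\<exists>e\<in>carrier C. Option.bind (g e) f = Some e'" by force
  qed (use F G in \<open>auto split: Option.bind_splits\<close>)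
  then show ?thesis unfolding rle_def by blast
qed

lemma riso_rle: assumes "riso Fam A B" shows "rle Fam A B" "rle Fam B A"
proof -
  obtain g where g: "riso_fun A B g" and r: "is_realisation Fam A" "is_realisation Fam B"
    using assms unfolding riso_def by blast
  show "rle Fam B A" unfolding rle_def using rmap_iso[OF g r] by blast
  show "rle Fam A B" unfolding rle_def using rmap_iso[OF riso_fun_inv[OF g] r(2) r(1)] by blast
qed

lemma rle_refl: "is_realisation Fam R \<Longrightarrow> rle Fam R R"
  using riso_rle riso_refl by blast



definition closedF :: "'a set set \<Rightarrow> bool" where
  "closedF Fam \<longleftrightarrow> (\<forall>Z. (\<forall>F. finite F \<and> F \<subseteq> Z \<longrightarrow> (\<exists>W\<in>Fam. F \<subseteq> W)) \<and>
      (\<forall>a\<in>Z. \<exists>Y\<in>Fam. a \<in> Y \<and> Y \<subseteq> Z) \<longrightarrow> Z \<in> Fam)"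

lemma configsD1: "W \<in> configs E Con ent \<Longrightarrow> finite F \<Longrightarrow> F \<subseteq> W \<Longrightarrow> F \<in> Con"
  unfolding configs_def by auto

lemma configsD2: "W \<in> configs E Con ent \<Longrightarrow> e \<in> W \<Longrightarrow> \<exists>es. es \<noteq> [] \<and> last es = e \<and> set es \<subseteq> W \<and>
                   (\<forall>i<length es. ent (set (take i es)) (es ! i))"
  unfolding configs_def mem_Collect_eq by (elim conjE ballE) auto

lemma configsI: "(\<And>F. finite F \<Longrightarrow> F \<subseteq> W \<Longrightarrow> F \<in> Con) \<Longrightarrow> (\<And>e. e \<in> W \<Longrightarrow> \<exists>es. es \<noteq> [] \<and> last es = e \<and> set es \<subseteq> W \<and>
                   (\<forall>i<length es. ent (set (take i es)) (es ! i))) \<Longrightarrow> W \<in> configs E Con ent"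
  unfolding configs_def mem_Collect_eq by (intro conjI allI impI ballI) auto

lemma closedF_configs: "closedF (configs E Con ent)"
  unfolding closedF_def
proof (intro allI impI)
  fix Z assume h: "(\<forall>F. finite F \<and> F \<subseteq> Z \<longrightarrow> (\<exists>W\<in>configs E Con ent. F \<subseteq> W)) \<and>
      (\<forall>a\<in>Z. \<exists>Y\<in>configs E Con ent. a \<in> Y \<and> Y \<subseteq> Z)"
  have h1: "\<And>F. finite F \<Longrightarrow> F \<subseteq> Z \<Longrightarrow> \<exists>W\<in>configs E Con ent. F \<subseteq> W" using h by simp
  have h2: "\<And>a. a \<in> Z \<Longrightarrow> \<exists>Y\<in>configs E Con ent. a \<in> Y \<and> Y \<subseteq> Z" using h by simp
  show "Z \<in> configs E Con ent"
  proof (rule configsI)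
    fix F assume F: "finite F" "F \<subseteq> Z"
    then obtain W where W: "W \<in> configs E Con ent" "F \<subseteq> W" using h1 by blast
    show "F \<in> Con" by (rule configsD1[OF W(1) F(1) W(2)])
  next
    fix e assume "e \<in> Z"
    then obtain Y where Y: "Y \<in> configs E Con ent" "e \<in> Y" "Y \<subseteq> Z" using h2 by blast
    obtain es where "es \<noteq> [] \<and> last es = e \<and> set es \<subseteq> Y \<and>
                   (\<forall>i<length es. ent (set (take i es)) (es ! i))" using configsD2[OF Y(1,2)] by blast
    then show "\<exists>es. es \<noteq> [] \<and> last es = e \<and> set es \<subseteq> Z \<and>
                   (\<forall>i<length es. ent (set (take i es)) (es ! i))" using Y(3) by blast
  qed
qed
lemma closedFI: assumes "closedF Fam" "\<And>F. finite F \<Longrightarrow> F \<subseteq> Z \<Longrightarrow> \<exists>W\<in>Fam. F \<subseteq> W"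
  "\<And>a. a\<in>Z \<Longrightarrow> \<exists>Y\<in>Fam. a\<in>Y \<and> Y \<subseteq> Z" shows "Z \<in> Fam"
  using assms unfolding closedF_def by blast

lemma extremal_real: "extremal Fam R \<Longrightarrow> is_realisation Fam R"
  unfolding extremal_def by blast

lemma extremal_any:
  fixes R :: "('e,'a) real" and S :: "('f,'a) real"
  assumes ex: "extremal Fam R" and fm: "rmap Fam R S f" and tot: "total_map R f"
  shows "iso_map R S f"
proof -
  note F = rmapD[OF fm]
  define s where "s y = (SOME e. e \<in> carrier R \<and> f e = Some y)" for y
  have s: "s y \<in> carrier R \<and> f (s y) = Some y" if "y \<in> carrier S" for y
    unfolding s_def using F(5)[OF that] by (rule someI2_bex) auto
  have sinj: "inj_on s (carrier S)" by (rule inj_onI) (metis s option.inject)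
  define fp where "fp a = the (f a)" for a
  have fps: "fp (s y) = y" if "y \<in> carrier S" for y using s[OF that] fp_def by simp
  define R2 :: "('e,'a) real" where
    "R2 = \<lparr>carrier = s ` carrier S, rord = \<lambda>a b. rord S (fp a) (fp b), lab = \<lambda>a. lab S (fp a)\<rparr>"
  have iso1: "riso_fun S R2 s" unfolding riso_fun_def R2_def
    using sinj fps by (auto simp: bij_betw_def)
  have r2: "is_realisation Fam R2" by (rule real_iso[OF iso1 F(2)])
  define f2 where "f2 e = map_option s (f e)" for e
  have m2: "rmap Fam R R2 f2" unfolding rmap_def
  proof (intro conjI allI impI ballI)
    show "is_realisation Fam R" by (fact F(1))
    show "is_realisation Fam R2" by (fact r2)
  next
    fix e assume "f2 e \<noteq> None" then show "e \<in> carrier R" using F(3) f2_def by auto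
  next
    fix e e' assume "f2 e = Some e'" then show "e' \<in> carrier R2" using F(4) f2_def R2_def by auto
  next
    fix e' assume "e' \<in> carrier R2"
    then obtain y where y: "y \<in> carrier S" "e' = s y" unfolding R2_def by auto
    then show "\<exists>e\<in>carrier R. f2 e = Some e'" using s[OF y(1)] f2_def by auto
  next
    fix x assume "down_closed R x"
    then have "down_closed R2 (s ` {e'. \<exists>e\<in>x. f e = Some e'})" using F(6) dc_iso[OF iso1] by blast
    moreover have "s ` {e'. \<exists>e\<in>x. f e = Some e'} = {e'. \<exists>e\<in>x. f2 e = Some e'}" unfolding f2_def by auto
    ultimately show "down_closed R2 {e'. \<exists>e\<in>x. f2 e = Some e'}" by simp
  next
    fix e e' assume "f2 e = Some e'"
    then obtain y where "f e = Some y" "e' = s y" unfolding f2_def by auto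
    then show "lab R e = lab R2 e'" using F(7) F(4) fps R2_def by auto
  qed
  have t2: "total_map R f2" using tot unfolding total_map_def f2_def by auto
  obtain g2 where g2: "\<forall>e\<in>carrier R. f2 e = Some (g2 e)" "riso_fun R R2 g2"
    using ex m2 t2 unfolding extremal_def iso_map_def by blast
  have iso3: "riso_fun R S (inv_into (carrier S) s \<circ> g2)" using riso_fun_comp[OF g2(2) riso_fun_inv[OF iso1]] .
  have "f e = Some ((inv_into (carrier S) s \<circ> g2) e)" if "e \<in> carrier R" for e
  proof -
    have "f e \<noteq> None" using tot that unfolding total_map_def by blast
    then obtain y where y: "f e = Some y" by (cases "f e") auto
    have "y \<in> carrier S" using F(4) y by blast
    moreover have "g2 e = s y" using g2(1) that y f2_def by auto
    ultimately show ?thesis using y sinj by simp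
  qed
  then show ?thesis unfolding iso_map_def using iso3 by blast
qed

lemma dc_below: assumes "is_realisation Fam R" "w \<in> carrier R"
  shows "down_closed R {u \<in> carrier R. rord R u w}"
  unfolding down_closed_def using realD(3)[OF assms(1) _ _ assms(2)] by blast

lemma dom_dc:
  assumes cl: "closedF Fam" and ex: "extremal Fam R" and gm: "rmap Fam R S g"
    and v: "v \<in> carrier R" "g v \<noteq> None" and u: "u \<in> carrier R" "rord R u v"
  shows "g u \<noteq> None"
proof -
  note G = rmapD[OF gm]
  note RR = realD[OF extremal_real[OF ex]]
  define R2 where "R2 = R\<lparr>rord := \<lambda>u v. rord R u v \<and> (g v \<noteq> None \<longrightarrow> g u \<noteq> None)\<rparr>"
  have R2s: "carrier R2 = carrier R" "lab R2 = lab R" "rord R2 = (\<lambda>u v. rord R u v \<and> (g v \<noteq> None \<longrightarrow> g u \<noteq> None))"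
    unfolding R2_def by simp_all
  have r2: "is_realisation Fam R2" unfolding is_realisation_def
  proof (intro conjI ballI allI impI)
    fix z assume dz: "down_closed R2 z"
    have zc: "z \<subseteq> carrier R" and zd: "\<And>e e'. e \<in> z \<Longrightarrow> e' \<in> carrier R \<Longrightarrow> rord R e' e \<Longrightarrow>
       (g e \<noteq> None \<longrightarrow> g e' \<noteq> None) \<Longrightarrow> e' \<in> z"
      using dz unfolding down_closed_def R2_def by auto
    define zz where "zz = {u \<in> carrier R. \<exists>v\<in>z. rord R u v}"
    have dzz: "down_closed R zz" unfolding down_closed_def zz_def using RR(3) zc by blast
    have zzz: "z \<subseteq> zz" unfolding zz_def using zc RR(1) by blast
    have YD: "lab R ` {u \<in> z. g u \<noteq> None} \<in> Fam"
    proof -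
      define y where "y = {u \<in> carrier R. \<exists>v\<in>z. g v \<noteq> None \<and> rord R u v}"
      have dy: "down_closed R y" unfolding down_closed_def y_def using RR(3) zc by blast
      have "y \<inter> {u. g u \<noteq> None} = {u \<in> z. g u \<noteq> None}"
        unfolding y_def using zd zc RR(1) by blast
      have "lab S ` {e'. \<exists>e\<in>y. g e = Some e'} \<in> Fam" using G(6)[OF dy] RR(6)[of "_"] realD(6)[OF G(2)] by blast
      moreover have "lab S ` {e'. \<exists>e\<in>y. g e = Some e'} = lab R ` (y \<inter> {u. g u \<noteq> None})"
        using G(7) by force
      ultimately show ?thesis using \<open>y \<inter> {u. g u \<noteq> None} = {u \<in> z. g u \<noteq> None}\<close> by simp
    qed
    have "lab R ` z \<in> Fam"
    proof (rule closedFI[OF cl])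
      fix F assume "finite F" "F \<subseteq> lab R ` z"
      then have "F \<subseteq> lab R ` zz" using zzz by auto
      then show "\<exists>W\<in>Fam. F \<subseteq> W" by (rule bexI[OF _ RR(6)[OF dzz]])
    next
      fix a assume "a \<in> lab R ` z"
      then obtain w where w: "w \<in> z" "a = lab R w" by auto
      show "\<exists>Y\<in>Fam. a \<in> Y \<and> Y \<subseteq> lab R ` z"
      proof (cases "g w = None")
        case True
        have wc: "w \<in> carrier R" using zc w by auto
        have "down_closed R {u \<in> carrier R. rord R u w}" by (rule dc_below[OF extremal_real[OF ex] wc])
        then have 1: "lab R ` {u \<in> carrier R. rord R u w} \<in> Fam" by (rule RR(6))
        have "{u \<in> carrier R. rord R u w} \<subseteq> z" using zd[OF w(1)] True by auto
        then have 2: "lab R ` {u \<in> carrier R. rord R u w} \<subseteq> lab R ` z" by (rule image_mono)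
        have "w \<in> {u \<in> carrier R. rord R u w}" using RR(1) wc by auto
        then have 3: "a \<in> lab R ` {u \<in> carrier R. rord R u w}" using w by auto
        show ?thesis by (rule bexI[OF _ 1], rule conjI[OF 3 2])
      next
        case False
        then have 3: "a \<in> lab R ` {u \<in> z. g u \<noteq> None}" using w by auto
        have 2: "lab R ` {u \<in> z. g u \<noteq> None} \<subseteq> lab R ` z" by auto
        show ?thesis by (rule bexI[OF _ YD], rule conjI[OF 3 2])
      qed
    qed
    then show "lab R2 ` z \<in> Fam" using R2s by simp
  next
    fix e assume "e \<in> carrier R2" then show "rord R2 e e" using RR(1) R2s by simp
  next
    fix e e' assume "e \<in> carrier R2" "e' \<in> carrier R2" "rord R2 e e' \<and> rord R2 e' e"
    then show "e = e'" using RR(2)[of e e'] R2s by auto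
  next
    fix e1 e2 e3 assume a: "e1 \<in> carrier R2" "e2 \<in> carrier R2" "e3 \<in> carrier R2" "rord R2 e1 e2 \<and> rord R2 e2 e3"
    then have "rord R e1 e3" using RR(3)[of e1 e2 e3] R2s by auto
    then show "rord R2 e1 e3" using a R2s by simp
  next
    fix e assume e: "e \<in> carrier R2"
    have "{e'\<in>carrier R2. rord R2 e' e} \<subseteq> {e'\<in>carrier R. rord R e' e}" using R2s by auto
    moreover have "finite {e'\<in>carrier R. rord R e' e}" using RR(4) e R2s(1) by simp
    ultimately show "finite {e'\<in>carrier R2. rord R2 e' e}" by (rule finite_subset)
  next
    fix e assume "e \<in> carrier R2" then show "lab R2 e \<in> \<Union>Fam" using RR(5) R2s by simp
  qed
  define f where "f u = (if u \<in> carrier R then Some u else None)" for u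
  have fx: "{e'. \<exists>e\<in>x. f e = Some e'} = x" if "x \<subseteq> carrier R" for x
    using that unfolding f_def by auto
  have fm: "rmap Fam R R2 f" unfolding rmap_def
  proof (intro conjI allI impI ballI)
    fix x assume dx: "down_closed R x"
    then have xc: "x \<subseteq> carrier R" and xd: "\<And>e e'. e\<in>x \<Longrightarrow> e'\<in>carrier R \<Longrightarrow> rord R e' e \<Longrightarrow> e' \<in> x"
      unfolding down_closed_def by auto
    have "down_closed R2 x" unfolding down_closed_def R2s using xc xd by auto
    then show "down_closed R2 {e'. \<exists>e\<in>x. f e = Some e'}" using fx[OF xc] by simp
  qed (use extremal_real[OF ex] r2 R2s in \<open>auto simp: f_def split: if_splits\<close>)
  have "total_map R f" unfolding total_map_def f_def by auto
  then obtain h where h: "\<forall>e\<in>carrier R. f e = Some (h e)" "riso_fun R R2 h"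
    using ex fm unfolding extremal_def iso_map_def by blast
  have "h e = e" if "e \<in> carrier R" for e using h(1) that f_def by auto
  then have "rord R u v \<longleftrightarrow> rord R2 u v" using riso_funD(2)[OF h(2)] u v by metis
  then show ?thesis using u v R2s by auto
qed



lemma restr_sub: "carrier (restr R e) \<subseteq> carrier R" by auto

lemma restr_dc: assumes "is_realisation Fam R" "e \<in> carrier R" "down_closed (restr R e) z"
  shows "down_closed R z"
proof -
  have zc: "z \<subseteq> {u \<in> carrier R. rord R u e}" and zd: "\<And>v u. v \<in> z \<Longrightarrow> u \<in> carrier R \<Longrightarrow> rord R u e \<Longrightarrow> rord R u v \<Longrightarrow> u \<in> z"
    using assms(3) unfolding down_closed_def by auto
  have "u \<in> z" if "v \<in> z" "u \<in> carrier R" "rord R u v" for u v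
  proof -
    have "v \<in> carrier R" "rord R v e" using zc that by auto
    then have "rord R u e" using realD(3)[OF assms(1) that(2) _ assms(2) that(3)] by blast
    then show ?thesis using zd that by blast
  qed
  then show ?thesis unfolding down_closed_def using zc by blast
qed

lemma dc_restr: assumes "down_closed R z" shows "down_closed (restr R e) (z \<inter> {u. rord R u e})"
  using assms unfolding down_closed_def by auto

lemma restr_real: assumes "is_realisation Fam R" "e \<in> carrier R" shows "is_realisation Fam (restr R e)"
proof -
  note RR = realD[OF assms(1)]
  show ?thesis unfolding is_realisation_def
  proof (intro conjI ballI allI impI)
    fix x assume "down_closed (restr R e) x"
    then have "down_closed R x" by (rule restr_dc[OF assms])
    then show "lab (restr R e) ` x \<in> Fam" using RR(6) by simp
  next
    fix e1 assume "e1 \<in> carrier (restr R e)" then show "rord (restr R e) e1 e1" using RR(1) by simp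
  next
    fix e1 e2 assume "e1 \<in> carrier (restr R e)" "e2 \<in> carrier (restr R e)" "rord (restr R e) e1 e2 \<and> rord (restr R e) e2 e1"
    then show "e1 = e2" using RR(2)[of e1 e2] by auto
  next
    fix e1 e2 e3 assume "e1 \<in> carrier (restr R e)" "e2 \<in> carrier (restr R e)" "e3 \<in> carrier (restr R e)"
      "rord (restr R e) e1 e2 \<and> rord (restr R e) e2 e3"
    then show "rord (restr R e) e1 e3" using RR(3)[of e1 e2 e3] by auto
  next
    fix e1 assume e1: "e1 \<in> carrier (restr R e)"
    have "{e' \<in> carrier (restr R e). rord (restr R e) e' e1} \<subseteq> {e' \<in> carrier R. rord R e' e1}" by auto
    moreover have "finite {e' \<in> carrier R. rord R e' e1}" using RR(4) e1 by auto
    ultimately show "finite {e' \<in> carrier (restr R e). rord (restr R e) e' e1}" by (rule finite_subset)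
  next
    fix e1 assume "e1 \<in> carrier (restr R e)" then show "lab (restr R e) e1 \<in> \<Union> Fam" using RR(5) by auto
  qed
qed

lemma maxA_eq: assumes "is_realisation Fam R" "t \<in> carrier R" "\<forall>e\<in>carrier R. rord R e t"
  shows "maxA R = lab R t"
proof -
  have "(THE t. t \<in> carrier R \<and> (\<forall>e\<in>carrier R. rord R e t)) = t"
  proof (rule the_equality)
    show "t \<in> carrier R \<and> (\<forall>e\<in>carrier R. rord R e t)" using assms by blast
    fix t' assume "t' \<in> carrier R \<and> (\<forall>e\<in>carrier R. rord R e t')"
    then show "t' = t" using realD(2)[OF assms(1), of t' t] assms by auto
  qed
  then show ?thesis unfolding maxA_def by simp
qed

lemma restr_top: assumes "is_realisation Fam R" "e \<in> carrier R"
  shows "has_top (restr R e)" "maxA (restr R e) = lab R e"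
proof -
  have "e \<in> carrier (restr R e)" using realD(1)[OF assms(1) assms(2)] assms(2) by simp
  moreover have "\<forall>u\<in>carrier (restr R e). rord (restr R e) u e" by simp
  ultimately show "has_top (restr R e)" unfolding has_top_def by blast
  show "maxA (restr R e) = lab R e"
    using maxA_eq[OF restr_real[OF assms] \<open>e \<in> carrier (restr R e)\<close>] by simp
qed



definition gord :: "('e,'a) real \<Rightarrow> 'e \<Rightarrow> ('f,'a) real \<Rightarrow> ('e \<Rightarrow> 'f option) \<Rightarrow> 'f + 'e \<Rightarrow> 'f + 'e \<Rightarrow> bool" where
  "gord R e R' f a b = (case a of
      Inl x \<Rightarrow> (case b of Inl y \<Rightarrow> rord R' x y | Inr v \<Rightarrow> (\<exists>w\<in>carrier R. rord R w e \<and> rord R w v \<and> f w = Some x))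
    | Inr u \<Rightarrow> (case b of Inl y \<Rightarrow> False | Inr v \<Rightarrow> rord R u v))"

lemma gord_simps[simp]:
  "gord R e R' f (Inl x) (Inl y) = rord R' x y"
  "gord R e R' f (Inl x) (Inr v) = (\<exists>w\<in>carrier R. rord R w e \<and> rord R w v \<and> f w = Some x)"
  "gord R e R' f (Inr u) (Inl y) = False"
  "gord R e R' f (Inr u) (Inr v) = rord R u v"
  unfolding gord_def by simp_all

lemma restr_extremal:
  fixes R :: "('e,'a) real"
  assumes cl: "closedF Fam" and ex: "extremal Fam R" and ec: "e \<in> carrier R"
  shows "extremal Fam (restr R e)"
  unfolding extremal_def
proof (intro conjI allI impI)
  have rR: "is_realisation Fam R" by (rule extremal_real[OF ex])
  note RR = realD[OF rR]
  show rE: "is_realisation Fam (restr R e)" by (rule restr_real[OF rR ec])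
  fix R' :: "('e,'a) real" and f
  assume "rmap Fam (restr R e) R' f \<and> total_map (restr R e) f"
  then have fm: "rmap Fam (restr R e) R' f" and tot: "total_map (restr R e) f" by auto
  note FF = rmapD[OF fm]
  note R'R = realD[OF FF(2)]
  let ?E = "{u \<in> carrier R. rord R u e}"
  have fS: "\<exists>y. f u = Some y \<and> y \<in> carrier R'" if "u \<in> carrier R" "rord R u e" for u
  proof -
    have "f u \<noteq> None" using tot that unfolding total_map_def by auto
    then obtain y where "f u = Some y" by (cases "f u") auto
    then show ?thesis using FF(4) by blast
  qed
  have fdom: "u \<in> carrier R \<and> rord R u e" if "f u = Some y" for u y using FF(3) that by fastforce
  have flab: "lab R u = lab R' y" if "f u = Some y" for u y using FF(7) that by fastforce
  (* the image of the down-closure of w is down-closed *)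
  have fimg: "x \<in> {y. \<exists>w'\<in>carrier R. rord R w' w \<and> f w' = Some y}"
    if "f w = Some y" "x \<in> carrier R'" "rord R' x y" for w x y
  proof -
    have wE: "w \<in> carrier R" "rord R w e" using fdom[OF that(1)] by auto
    have "down_closed (restr R e) {u \<in> carrier R. rord R u w}"
      unfolding down_closed_def using RR(3)[OF _ wE(1) ec _ wE(2)] RR(3)[OF _ _ wE(1)] by auto
    then have d: "down_closed R' {y. \<exists>u\<in>{u \<in> carrier R. rord R u w}. f u = Some y}" by (rule FF(6))
    have "y \<in> {y. \<exists>u\<in>{u \<in> carrier R. rord R u w}. f u = Some y}" using that(1) wE RR(1) by auto
    then have "x \<in> {y. \<exists>u\<in>{u \<in> carrier R. rord R u w}. f u = Some y}"
      using d that(2,3) unfolding down_closed_def by blast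
    then show ?thesis by auto
  qed
  define G :: "('e + 'e, 'a) real" where
    "G = \<lparr>carrier = Inl ` carrier R' \<union> Inr ` {u \<in> carrier R. \<not> rord R u e},
          rord = gord R e R' f, lab = case_sum (lab R') (lab R)\<rparr>"
  have Gs: "carrier G = Inl ` carrier R' \<union> Inr ` {u \<in> carrier R. \<not> rord R u e}"
    "rord G = gord R e R' f" "lab G = case_sum (lab R') (lab R)" unfolding G_def by simp_all
  have rG: "is_realisation Fam G" unfolding is_realisation_def
  proof (intro conjI ballI allI impI)
    fix a assume "a \<in> carrier G"
    then show "rord G a a" using Gs R'R(1) RR(1) by auto
  next
    fix a b assume ab: "a \<in> carrier G" "b \<in> carrier G" "rord G a b \<and> rord G b a"
    show "a = b"
    proof (cases a)
      case (Inl x) note a = this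
      show ?thesis
      proof (cases b)
        case (Inl y) then show ?thesis using a ab Gs R'R(2)[of x y] by auto
      next
        case (Inr v) then show ?thesis using a ab Gs by auto
      qed
    next
      case (Inr u) note a = this
      show ?thesis
      proof (cases b)
        case (Inl y) then show ?thesis using a ab Gs by auto
      next
        case (Inr v) then show ?thesis using a ab Gs RR(2)[of u v] by auto
      qed
    qed
  next
    fix a b c assume abc: "a \<in> carrier G" "b \<in> carrier G" "c \<in> carrier G" "rord G a b \<and> rord G b c"
    show "rord G a c"
    proof (cases c)
      case (Inl z)
      then obtain x y where xy: "a = Inl x" "b = Inl y" using abc Gs by (cases a; cases b) auto
      then show ?thesis using abc Gs Inl R'R(3)[of x y z] by auto
    next
      case (Inr v) note c = this
      show ?thesis
      proof (cases b)
        case (Inl y) note b = this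
        then obtain x where x: "a = Inl x" using abc Gs by (cases a) auto
        obtain w where w: "w \<in> carrier R" "rord R w e" "rord R w v" "f w = Some y" using abc b c Gs by auto
        have "x \<in> carrier R'" "rord R' x y" using abc x b Gs by auto
        then obtain w' where w': "w' \<in> carrier R" "rord R w' w" "f w' = Some x" using fimg[OF w(4)] by blast
        have "v \<in> carrier R" using abc c Gs by auto
        then have "rord R w' e" "rord R w' v" using RR(3)[OF w'(1) w(1)] w w' ec by auto
        then show ?thesis using x c Gs w' by auto
      next
        case (Inr u) note b = this
        show ?thesis
        proof (cases a)
          case (Inl x)
          obtain w where w: "w \<in> carrier R" "rord R w e" "rord R w u" "f w = Some x" using abc b Inl Gs by auto
          have "u \<in> carrier R" "v \<in> carrier R" "rord R u v" using abc b c Gs by auto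
          then have "rord R w v" using RR(3)[OF w(1)] w by blast
          then show ?thesis using Inl c Gs w by auto
        next
          case (Inr t)
          have "t \<in> carrier R" "u \<in> carrier R" "v \<in> carrier R" "rord R t u" "rord R u v" using abc b c Inr Gs by auto
          then have "rord R t v" using RR(3)[of t u v] by blast
          then show ?thesis using Inr c Gs by simp
        qed
      qed
    qed
  next
    fix a assume a: "a \<in> carrier G"
    show "finite {b \<in> carrier G. rord G b a}"
    proof (cases a)
      case (Inl y)
      then have y: "y \<in> carrier R'" using a Gs by auto
      have "{b \<in> carrier G. rord G b a} \<subseteq> Inl ` {x \<in> carrier R'. rord R' x y}"
      proof
        fix b assume "b \<in> {b \<in> carrier G. rord G b a}"
        then show "b \<in> Inl ` {x \<in> carrier R'. rord R' x y}" using Inl Gs by (cases b) auto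
      qed
      moreover have "finite (Inl ` {x \<in> carrier R'. rord R' x y})" using R'R(4)[OF y] by simp
      ultimately show ?thesis by (rule finite_subset)
    next
      case (Inr v)
      then have v: "v \<in> carrier R" using a Gs by auto
      have "{b \<in> carrier G. rord G b a} \<subseteq> Inl ` ((\<lambda>w. the (f w)) ` {u \<in> carrier R. rord R u v}) \<union> Inr ` {u \<in> carrier R. rord R u v}"
      proof
        fix b assume b: "b \<in> {b \<in> carrier G. rord G b a}"
        show "b \<in> Inl ` ((\<lambda>w. the (f w)) ` {u \<in> carrier R. rord R u v}) \<union> Inr ` {u \<in> carrier R. rord R u v}"
        proof (cases b)
          case (Inl x)
          then obtain w where "w \<in> carrier R" "rord R w v" "f w = Some x" using b Inr Gs by auto
          then have "x \<in> (\<lambda>w. the (f w)) ` {u \<in> carrier R. rord R u v}" by force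
          then show ?thesis using Inl by blast
        next
          case (Inr u) then show ?thesis using b \<open>a = Inr v\<close> Gs by auto
        qed
      qed
      moreover have "finite (Inl ` ((\<lambda>w. the (f w)) ` {u \<in> carrier R. rord R u v}) \<union> Inr ` {u \<in> carrier R. rord R u v})"
        using RR(4)[OF v] by simp
      ultimately show ?thesis by (rule finite_subset)
    qed
  next
    fix a assume "a \<in> carrier G" then show "lab G a \<in> \<Union>Fam" using Gs R'R(5) RR(5) by auto
  next
    fix z assume dz: "down_closed G z"
    have zc: "z \<subseteq> carrier G" and zd: "\<And>b b'. b \<in> z \<Longrightarrow> b' \<in> carrier G \<Longrightarrow> rord G b' b \<Longrightarrow> b' \<in> z"
      using dz unfolding down_closed_def by auto
    define z1 where "z1 = {x. Inl x \<in> z}"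
    define z2 where "z2 = {u. Inr u \<in> z}"
    have z2c: "z2 \<subseteq> carrier R" "\<And>u. u \<in> z2 \<Longrightarrow> \<not> rord R u e" using zc Gs unfolding z2_def by auto
    have labz: "lab G ` z = lab R' ` z1 \<union> lab R ` z2"
    proof
      show "lab G ` z \<subseteq> lab R' ` z1 \<union> lab R ` z2"
      proof
        fix a assume "a \<in> lab G ` z"
        then obtain b where b: "b \<in> z" "a = lab G b" by auto
        then show "a \<in> lab R' ` z1 \<union> lab R ` z2" unfolding z1_def z2_def using Gs by (cases b) auto
      qed
      show "lab R' ` z1 \<union> lab R ` z2 \<subseteq> lab G ` z"
      proof
        fix a assume "a \<in> lab R' ` z1 \<union> lab R ` z2"
        then consider x where "x \<in> z1" "a = lab R' x" | u where "u \<in> z2" "a = lab R u" by blast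
        then show "a \<in> lab G ` z"
        proof cases
          case 1 then have "a = lab G (Inl x)" "Inl x \<in> z" using Gs z1_def by auto
          then show ?thesis by blast
        next
          case 2 then have "a = lab G (Inr u)" "Inr u \<in> z" using Gs z2_def by auto
          then show ?thesis by blast
        qed
      qed
    qed
    have dz1: "down_closed R' z1" unfolding down_closed_def
    proof (intro conjI ballI impI)
      show "z1 \<subseteq> carrier R'" using zc Gs unfolding z1_def by auto
      fix x y assume "x \<in> z1" "y \<in> carrier R'" "rord R' y x"
      then have "Inl x \<in> z" "Inl y \<in> carrier G" "rord G (Inl y) (Inl x)" using Gs z1_def by auto
      then show "y \<in> z1" using zd z1_def by blast
    qed
    have Y1: "lab R' ` z1 \<in> Fam" by (rule R'R(6)[OF dz1])
    define zz where "zz = {u \<in> carrier R. rord R u e \<or> (\<exists>v\<in>z2. rord R u v)}"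
    have dzz: "down_closed R zz" unfolding down_closed_def zz_def
    proof (intro conjI ballI impI)
      fix u u' assume "u \<in> {u \<in> carrier R. rord R u e \<or> (\<exists>v\<in>z2. rord R u v)}" "u' \<in> carrier R" "rord R u' u"
      then show "u' \<in> {u \<in> carrier R. rord R u e \<or> (\<exists>v\<in>z2. rord R u v)}"
      proof (elim CollectE conjE disjE bexE)
        assume "rord R u e" "u \<in> carrier R" "u' \<in> carrier R" "rord R u' u"
        then have "rord R u' e" using RR(3)[of u' u e] ec by blast
        then show ?thesis using \<open>u' \<in> carrier R\<close> by blast
      next
        fix v assume "v \<in> z2" "rord R u v" "u \<in> carrier R" "u' \<in> carrier R" "rord R u' u"
        then have "rord R u' v" using RR(3)[of u' u v] z2c(1) by blast
        then show ?thesis using \<open>u' \<in> carrier R\<close> \<open>v \<in> z2\<close> by blast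
      qed
    qed auto
    have W: "lab R ` zz \<in> Fam" by (rule RR(6)[OF dzz])
    have sub: "lab G ` z \<subseteq> lab R ` zz"
    proof
      fix a assume "a \<in> lab G ` z"
      then consider x where "x \<in> z1" "a = lab R' x" | u where "u \<in> z2" "a = lab R u" using labz by blast
      then show "a \<in> lab R ` zz"
      proof cases
        case 1
        then have "x \<in> carrier R'" using dz1 unfolding down_closed_def by auto
        then obtain w where w: "w \<in> carrier (restr R e)" "f w = Some x" using FF(5) by blast
        then have "w \<in> zz" "a = lab R w" using 1 flab unfolding zz_def by auto
        then show ?thesis by blast
      next
        case 2
        then have "u \<in> zz" unfolding zz_def using z2c RR(1) by blast
        then show ?thesis using 2 by blast
      qed
    qed
    have "lab G ` z \<in> Fam"
    proof (rule closedFI[OF cl])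
      fix F assume "finite F" "F \<subseteq> lab G ` z"
      then have "F \<subseteq> lab R ` zz" using sub by auto
      then show "\<exists>W\<in>Fam. F \<subseteq> W" by (rule bexI[OF _ W])
    next
      fix a assume "a \<in> lab G ` z"
      then consider x where "x \<in> z1" "a = lab R' x" | v where "v \<in> z2" "a = lab R v" using labz by blast
      then show "\<exists>Y\<in>Fam. a \<in> Y \<and> Y \<subseteq> lab G ` z"
      proof cases
        case 1
        then have 3: "a \<in> lab R' ` z1" by blast
        have 2: "lab R' ` z1 \<subseteq> lab G ` z" using labz by auto
        show ?thesis by (rule bexI[OF _ Y1], rule conjI[OF 3 2])
      next
        case 2
        have vc: "v \<in> carrier R" using 2 z2c by auto
        have 1: "lab R ` {u \<in> carrier R. rord R u v} \<in> Fam" by (rule RR(6)[OF dc_below[OF rR vc]])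
        have 3: "a \<in> lab R ` {u \<in> carrier R. rord R u v}" using 2 vc RR(1) by auto
        have 4: "lab R ` {u \<in> carrier R. rord R u v} \<subseteq> lab G ` z"
        proof
          fix b assume "b \<in> lab R ` {u \<in> carrier R. rord R u v}"
          then obtain u where u: "u \<in> carrier R" "rord R u v" "b = lab R u" by auto
          show "b \<in> lab G ` z"
          proof (cases "rord R u e")
            case True
            obtain y where y: "f u = Some y" "y \<in> carrier R'" using fS[OF u(1) True] by blast
            have "Inr v \<in> z" using 2 z2_def by auto
            moreover have "Inl y \<in> carrier G" using y Gs by auto
            moreover have "rord G (Inl y) (Inr v)" using Gs u True y by auto
            ultimately have "Inl y \<in> z" using zd by blast
            moreover have "b = lab G (Inl y)" using u y flab Gs by auto
            ultimately show ?thesis by blast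
          next
            case False
            have "Inr v \<in> z" using 2 z2_def by auto
            moreover have "Inr u \<in> carrier G" using u False Gs by auto
            moreover have "rord G (Inr u) (Inr v)" using Gs u by auto
            ultimately have "Inr u \<in> z" using zd by blast
            moreover have "b = lab G (Inr u)" using u Gs by auto
            ultimately show ?thesis by blast
          qed
        qed
        show ?thesis by (rule bexI[OF _ 1], rule conjI[OF 3 4])
      qed
    qed
    then show "lab G ` z \<in> Fam" .
  qed
  define F where "F u = (if u \<in> carrier R then (if rord R u e then map_option Inl (f u) else Some (Inr u)) else None)" for u
  have FG: "rmap Fam R G F" unfolding rmap_def
  proof (intro conjI allI impI ballI)
    show "is_realisation Fam R" by (fact rR)
    show "is_realisation Fam G" by (fact rG)
  next
    fix u assume "F u \<noteq> None" then show "u \<in> carrier R" unfolding F_def by (auto split: if_splits)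
  next
    fix u b assume "F u = Some b"
    then show "b \<in> carrier G" unfolding F_def Gs using FF(4) by (auto split: if_splits)
  next
    fix b assume "b \<in> carrier G"
    then consider y where "b = Inl y" "y \<in> carrier R'" | u where "b = Inr u" "u \<in> carrier R" "\<not> rord R u e"
      using Gs by auto
    then show "\<exists>u\<in>carrier R. F u = Some b"
    proof cases
      case 1
      then obtain w where "w \<in> carrier (restr R e)" "f w = Some y" using FF(5) by blast
      then show ?thesis using 1 unfolding F_def by (intro bexI[of _ w]) auto
    next
      case 2 then show ?thesis unfolding F_def by (intro bexI[of _ u]) auto
    qed
  next
    fix u b assume "F u = Some b"
    then show "lab R u = lab G b" unfolding F_def Gs using flab by (auto split: if_splits)
  next
    fix x assume dx: "down_closed R x"
    have xc: "x \<subseteq> carrier R" and xd: "\<And>v u. v \<in> x \<Longrightarrow> u \<in> carrier R \<Longrightarrow> rord R u v \<Longrightarrow> u \<in> x"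
      using dx unfolding down_closed_def by auto
    have dxe: "down_closed R' {y. \<exists>u\<in>x \<inter> {u. rord R u e}. f u = Some y}"
      by (rule FF(6)[OF dc_restr[OF dx]])
    let ?I = "{b. \<exists>u\<in>x. F u = Some b}"
    show "down_closed G ?I" unfolding down_closed_def
    proof (intro conjI ballI impI)
      show "?I \<subseteq> carrier G"
      proof
        fix b assume "b \<in> ?I"
        then obtain u where "u \<in> x" "F u = Some b" by blast
        then show "b \<in> carrier G" unfolding F_def Gs using FF(4) xc by (auto split: if_splits)
      qed
    next
      fix b b' assume b: "b \<in> ?I" and b': "b' \<in> carrier G" "rord G b' b"
      then obtain u where u: "u \<in> x" "F u = Some b" by blast
      have uc: "u \<in> carrier R" using u xc by auto
      show "b' \<in> ?I"
      proof (cases "rord R u e")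
        case True
        obtain y where y: "f u = Some y" using fS[OF uc True] by blast
        then have by': "b = Inl y" using u uc True unfolding F_def by auto
        then obtain y' where y': "b' = Inl y'" "y' \<in> carrier R'" "rord R' y' y" using b' Gs by (cases b') auto
        have "y \<in> {y. \<exists>u\<in>x \<inter> {u. rord R u e}. f u = Some y}" using u True y by auto
        then have "y' \<in> {y. \<exists>u\<in>x \<inter> {u. rord R u e}. f u = Some y}"
          using dxe y' unfolding down_closed_def by blast
        then obtain w where w: "w \<in> x" "rord R w e" "f w = Some y'" by auto
        then have "F w = Some b'" using xc y' unfolding F_def by auto
        then show ?thesis using w by blast
      next
        case False
        then have bu: "b = Inr u" using u uc unfolding F_def by auto
        show ?thesis
        proof (cases b')
          case (Inl y')
          then obtain w where w: "w \<in> carrier R" "rord R w e" "rord R w u" "f w = Some y'" using b' bu Gs by auto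
          then have "w \<in> x" using xd[OF u(1)] by blast
          moreover have "F w = Some b'" using w Inl unfolding F_def by auto
          ultimately show ?thesis by blast
        next
          case (Inr u')
          then have "u' \<in> carrier R" "\<not> rord R u' e" "rord R u' u" using b' bu Gs by auto
          moreover then have "u' \<in> x" using xd[OF u(1)] by blast
          moreover have "F u' = Some b'" using calculation Inr unfolding F_def by auto
          ultimately show ?thesis by blast
        qed
      qed
    qed
  qed
  have Ft: "total_map R F" unfolding total_map_def F_def using fS by auto
  obtain H where H: "\<forall>u\<in>carrier R. F u = Some (H u)" "riso_fun R G H"
    using extremal_any[OF ex FG Ft] unfolding iso_map_def by blast
  define g where "g u = projl (H u)" for u
  have gH: "f u = Some (g u) \<and> H u = Inl (g u)" if uu: "u \<in> carrier R" "rord R u e" for u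
  proof -
    obtain y where y: "f u = Some y" using fS[OF uu] by blast
    then have "H u = Inl y" using H(1) uu F_def by auto
    then show ?thesis using y g_def by simp
  qed
  have Hinj: "inj_on H (carrier R)" using riso_funD(1)[OF H(2)] bij_betw_def by blast
  have "riso_fun (restr R e) R' g" unfolding riso_fun_def
  proof (intro conjI ballI)
    show "bij_betw g (carrier (restr R e)) (carrier R')" unfolding bij_betw_def
    proof
      show "inj_on g (carrier (restr R e))"
      proof (rule inj_onI)
        fix u1 u2 assume "u1 \<in> carrier (restr R e)" "u2 \<in> carrier (restr R e)" "g u1 = g u2"
        then show "u1 = u2" using gH[of u1] gH[of u2] Hinj unfolding inj_on_def by auto
      qed
      show "g ` carrier (restr R e) = carrier R'"
      proof
        show "g ` carrier (restr R e) \<subseteq> carrier R'" using gH FF(4) by auto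
        show "carrier R' \<subseteq> g ` carrier (restr R e)"
        proof
          fix y assume "y \<in> carrier R'"
          then obtain w where w: "w \<in> carrier (restr R e)" "f w = Some y" using FF(5) by blast
          then have "g w = y" using gH[of w] by auto
          then show "y \<in> g ` carrier (restr R e)" using w by blast
        qed
      qed
    qed
  next
    fix u1 u2 assume u: "u1 \<in> carrier (restr R e)" "u2 \<in> carrier (restr R e)"
    have "rord R u1 u2 = rord G (H u1) (H u2)" using riso_funD(2)[OF H(2)] u by auto
    also have "\<dots> = rord R' (g u1) (g u2)" using gH[of u1] gH[of u2] u Gs by auto
    finally show "rord (restr R e) u1 u2 = rord R' (g u1) (g u2)" by simp
  next
    fix u assume "u \<in> carrier (restr R e)"
    then show "lab R' (g u) = lab (restr R e) u" using gH[of u] flab by auto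
  qed
  then show "iso_map (restr R e) R' f" unfolding iso_map_def using gH by auto
qed



lemma riso_extremal:
  fixes R :: "('e,'a) real" and S :: "('f,'a) real"
  assumes ex: "extremal Fam R" and g: "riso_fun R S g"
  shows "extremal Fam S"
  unfolding extremal_def
proof (intro conjI allI impI)
  have rR: "is_realisation Fam R" by (rule extremal_real[OF ex])
  show rS: "is_realisation Fam S" by (rule real_iso[OF g rR])
  fix S' :: "('f,'a) real" and f assume "rmap Fam S S' f \<and> total_map S f"
  then have fm: "rmap Fam S S' f" and tot: "total_map S f" by auto
  note FF = rmapD[OF fm]
  have gb: "bij_betw g (carrier R) (carrier S)" using riso_funD(1)[OF g] .
  have gi: "g a \<in> carrier S" if "a \<in> carrier R" for a using gb that bij_betwE by blast
  define F where "F a = (if a \<in> carrier R then f (g a) else None)" for a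
  have FM: "rmap Fam R S' F" unfolding rmap_def
  proof (intro conjI allI impI ballI)
    show "is_realisation Fam R" by (fact rR)
    show "is_realisation Fam S'" by (fact FF(2))
  next
    fix a assume "F a \<noteq> None" then show "a \<in> carrier R" unfolding F_def by (auto split: if_splits)
  next
    fix a y assume "F a = Some y" then show "y \<in> carrier S'" unfolding F_def using FF(4) by (auto split: if_splits)
  next
    fix y assume "y \<in> carrier S'"
    then obtain b where b: "b \<in> carrier S" "f b = Some y" using FF(5) by blast
    then obtain a where "a \<in> carrier R" "b = g a" using gb by (metis bij_betw_def imageE)
    then show "\<exists>a\<in>carrier R. F a = Some y" using b unfolding F_def by (intro bexI[of _ a]) auto
  next
    fix x assume dx: "down_closed R x"
    have xc: "x \<subseteq> carrier R" using dx unfolding down_closed_def by auto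
    have "down_closed S' {y. \<exists>b\<in>g ` x. f b = Some y}" by (rule FF(6)[OF dc_iso[OF g dx]])
    moreover have "{y. \<exists>b\<in>g ` x. f b = Some y} = {y. \<exists>a\<in>x. F a = Some y}" unfolding F_def using xc by auto
    ultimately show "down_closed S' {y. \<exists>a\<in>x. F a = Some y}" by simp
  next
    fix a y assume "F a = Some y"
    then have "a \<in> carrier R" "f (g a) = Some y" unfolding F_def by (auto split: if_splits)
    then show "lab R a = lab S' y" using FF(7) riso_funD(3)[OF g] by metis
  qed
  have Ft: "total_map R F" unfolding total_map_def F_def using tot gi unfolding total_map_def by auto
  obtain H where H: "\<forall>a\<in>carrier R. F a = Some (H a)" "riso_fun R S' H"
    using extremal_any[OF ex FM Ft] unfolding iso_map_def by blast
  have "riso_fun S S' (H \<circ> inv_into (carrier R) g)" by (rule riso_fun_comp[OF riso_fun_inv[OF g] H(2)])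
  moreover have "f b = Some ((H \<circ> inv_into (carrier R) g) b)" if "b \<in> carrier S" for b
  proof -
    have "inv_into (carrier R) g b \<in> carrier R" "g (inv_into (carrier R) g b) = b"
      using gb that by (auto simp: bij_betw_def inv_into_into f_inv_into_f)
    then show ?thesis using H(1) unfolding F_def by (metis comp_apply)
  qed
  ultimately show "iso_map S S' f" unfolding iso_map_def by blast
qed

lemma riso_extremal': "riso Fam R S \<Longrightarrow> extremal Fam R \<Longrightarrow> extremal Fam S"
  unfolding riso_def using riso_extremal by blast

lemma riso_top:
  assumes g: "riso_fun R S g" and rR: "is_realisation Fam R" and t: "has_top R"
  shows "has_top S" "maxA S = maxA R"
proof -
  have rS: "is_realisation Fam S" by (rule real_iso[OF g rR])
  obtain t where t: "t \<in> carrier R" "\<forall>e\<in>carrier R. rord R e t" using t unfolding has_top_def by blast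
  have gb: "bij_betw g (carrier R) (carrier S)" using riso_funD(1)[OF g] .
  have gt: "g t \<in> carrier S" using gb t bij_betwE by blast
  have all: "\<forall>b\<in>carrier S. rord S b (g t)"
  proof
    fix b assume "b \<in> carrier S"
    then obtain a where "a \<in> carrier R" "b = g a" using gb by (metis bij_betw_def imageE)
    then show "rord S b (g t)" using riso_funD(2)[OF g] t by auto
  qed
  then show "has_top S" unfolding has_top_def using gt by blast
  have "maxA S = lab S (g t)" by (rule maxA_eq[OF rS gt all])
  also have "\<dots> = lab R t" using riso_funD(3)[OF g] t by auto
  also have "\<dots> = maxA R" using maxA_eq[OF rR t(1,2)] by simp
  finally show "maxA S = maxA R" .
qed

lemma restr_rle: assumes rR: "is_realisation Fam R" and e: "e \<in> carrier R" shows "rle Fam (restr R e) R"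
proof -
  define f where "f u = (if u \<in> carrier R \<and> rord R u e then Some u else None)" for u
  have "rmap Fam R (restr R e) f" unfolding rmap_def
  proof (intro conjI allI impI ballI)
    show "is_realisation Fam R" by (fact rR)
    show "is_realisation Fam (restr R e)" by (rule restr_real[OF rR e])
  next
    fix x assume dx: "down_closed R x"
    have "{y. \<exists>u\<in>x. f u = Some y} = x \<inter> {u. rord R u e}"
      using dx unfolding f_def down_closed_def by (auto split: if_splits)
    then show "down_closed (restr R e) {y. \<exists>u\<in>x. f u = Some y}" using dc_restr[OF dx] by simp
  qed (auto simp: f_def split: if_splits)
  then show ?thesis unfolding rle_def by blast
qed

lemma rle_restr_iff:
  fixes R :: "('e,'a) real" and p :: "('f,'a) real"
  assumes cl: "closedF Fam" and ex: "extremal Fam R" and ep: "extremal Fam p" and tp: "has_top p"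
  shows "rle Fam p R \<longleftrightarrow> (\<exists>e\<in>carrier R. riso Fam (restr R e) p)"
proof
  have rR: "is_realisation Fam R" by (rule extremal_real[OF ex])
  assume "\<exists>e\<in>carrier R. riso Fam (restr R e) p"
  then obtain e where e: "e \<in> carrier R" "riso Fam (restr R e) p" by blast
  have "rle Fam p (restr R e)" using riso_rle(2)[OF e(2)] .
  then show "rle Fam p R" using rle_trans restr_rle[OF rR e(1)] by blast
next
  have rR: "is_realisation Fam R" by (rule extremal_real[OF ex])
  assume "rle Fam p R"
  then obtain g where gm: "rmap Fam R p g" unfolding rle_def by blast
  note G = rmapD[OF gm]
  obtain t where t: "t \<in> carrier p" "\<forall>e\<in>carrier p. rord p e t" using tp unfolding has_top_def by blast
  obtain w where w: "w \<in> carrier R" "g w = Some t" using G(5)[OF t(1)] by blast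
  define ge where "ge u = (if rord R u w then g u else None)" for u
  have dw: "down_closed p {y. \<exists>u\<in>{u \<in> carrier R. rord R u w}. g u = Some y}"
    by (rule G(6)[OF dc_below[OF rR w(1)]])
  have gem: "rmap Fam (restr R w) p ge" unfolding rmap_def
  proof (intro conjI allI impI ballI)
    show "is_realisation Fam (restr R w)" by (rule restr_real[OF rR w(1)])
    show "is_realisation Fam p" by (fact G(2))
  next
    fix u assume "ge u \<noteq> None" then show "u \<in> carrier (restr R w)" unfolding ge_def using G(3) by (auto split: if_splits)
  next
    fix u y assume "ge u = Some y" then show "y \<in> carrier p" unfolding ge_def using G(4) by (auto split: if_splits)
  next
    fix y assume y: "y \<in> carrier p"
    have "t \<in> {y. \<exists>u\<in>{u \<in> carrier R. rord R u w}. g u = Some y}" using w realD(1)[OF rR w(1)] by auto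
    moreover have "rord p y t" using t y by blast
    ultimately have "y \<in> {y. \<exists>u\<in>{u \<in> carrier R. rord R u w}. g u = Some y}"
      using dw y unfolding down_closed_def by (meson)
    then obtain u where "u \<in> carrier R" "rord R u w" "g u = Some y" by blast
    then show "\<exists>u\<in>carrier (restr R w). ge u = Some y" unfolding ge_def by (intro bexI[of _ u]) auto
  next
    fix x assume dx: "down_closed (restr R w) x"
    have "down_closed R x" by (rule restr_dc[OF rR w(1) dx])
    then have "down_closed p {y. \<exists>u\<in>x. g u = Some y}" by (rule G(6))
    moreover have "{y. \<exists>u\<in>x. g u = Some y} = {y. \<exists>u\<in>x. ge u = Some y}"
      using dx unfolding ge_def down_closed_def by auto
    ultimately show "down_closed p {y. \<exists>u\<in>x. ge u = Some y}" by simp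
  next
    fix u y assume "ge u = Some y" then show "lab (restr R w) u = lab p y" unfolding ge_def using G(7) by (auto split: if_splits)
  qed
  have exw: "extremal Fam (restr R w)" by (rule restr_extremal[OF cl ex w(1)])
  have tot: "total_map (restr R w) ge" unfolding total_map_def
  proof
    fix u assume u: "u \<in> carrier (restr R w)"
    have "ge w \<noteq> None" using w realD(1)[OF rR w(1)] unfolding ge_def by auto
    moreover have "w \<in> carrier (restr R w)" using w realD(1)[OF rR w(1)] by auto
    moreover have "rord (restr R w) u w" using u by simp
    ultimately show "ge u \<noteq> None" using dom_dc[OF cl exw gem _ _ u] by blast
  qed
  have "iso_map (restr R w) p ge" by (rule extremal_any[OF exw gem tot])
  then have "riso Fam (restr R w) p" unfolding iso_map_def riso_def using G(2) extremal_real[OF exw] by blast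
  then show "\<exists>e\<in>carrier R. riso Fam (restr R e) p" using w(1) by blast
qed



lemma merge_contra:
  fixes R :: "('e,'a) real"
  assumes ex: "extremal Fam R" and e: "e1 \<in> carrier R" "e2 \<in> carrier R" "e1 \<noteq> e2"
    and lab: "lab R e1 = lab R e2"
    and strict: "\<And>u. u \<in> carrier R \<Longrightarrow> (u \<noteq> e1 \<and> rord R u e1) \<longleftrightarrow> (u \<noteq> e2 \<and> rord R u e2)"
  shows False
proof -
  have rR: "is_realisation Fam R" by (rule extremal_real[OF ex])
  note RR = realD[OF rR]
  have inc1: "\<not> rord R e1 e2"
  proof
    assume "rord R e1 e2"
    then have "e1 \<noteq> e1 \<and> rord R e1 e1" using strict[OF e(1)] e(3) by blast
    then show False by simp
  qed
  have inc2: "\<not> rord R e2 e1"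
  proof
    assume "rord R e2 e1"
    then have "e2 \<noteq> e2 \<and> rord R e2 e2" using strict[OF e(2)] e(3) by blast
    then show False by simp
  qed
  define R2 :: "('e,'a) real" where "R2 = \<lparr>carrier = carrier R - {e2},
      rord = \<lambda>u v. rord R u v \<or> (u = e1 \<and> rord R e2 v), lab = lab R\<rparr>"
  have R2s: "carrier R2 = carrier R - {e2}" "rord R2 = (\<lambda>u v. rord R u v \<or> (u = e1 \<and> rord R e2 v))"
    "lab R2 = lab R" unfolding R2_def by simp_all
  have r2: "is_realisation Fam R2" unfolding is_realisation_def
  proof (intro conjI ballI allI impI)
    fix u assume "u \<in> carrier R2" then show "rord R2 u u" using RR(1) R2s by auto
  next
    fix u v assume uv: "u \<in> carrier R2" "v \<in> carrier R2" "rord R2 u v \<and> rord R2 v u"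
    then have uc: "u \<in> carrier R" "v \<in> carrier R" using R2s by auto
    show "u = v"
    proof (cases "rord R u v")
      case True
      show ?thesis
      proof (cases "rord R v u")
        case True2: True then show ?thesis using RR(2)[OF uc] True by blast
      next
        case False
        then have "v = e1" "rord R e2 u" using uv R2s by auto
        then have "rord R e2 e1" using RR(3)[OF e(2) uc(1) e(1)] True by blast
        then show ?thesis using inc2 by blast
      qed
    next
      case False
      then have "u = e1" "rord R e2 v" using uv R2s by auto
      moreover have "rord R v u \<or> (v = e1 \<and> rord R e2 u)" using uv R2s by auto
      ultimately show ?thesis using RR(3)[OF e(2) uc(2) e(1)] inc2 by auto
    qed
  next
    fix u v w assume uvw: "u \<in> carrier R2" "v \<in> carrier R2" "w \<in> carrier R2" "rord R2 u v \<and> rord R2 v w"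
    then have c: "u \<in> carrier R" "v \<in> carrier R" "w \<in> carrier R" "u \<noteq> e2" using R2s by auto
    have uv: "rord R u v \<or> (u = e1 \<and> rord R e2 v)" and vw: "rord R v w \<or> (v = e1 \<and> rord R e2 w)"
      using uvw R2s by auto
    have "rord R u w \<or> (u = e1 \<and> rord R e2 w)"
    proof (cases "rord R v w")
      case True
      then show ?thesis using uv RR(3)[OF c(1) c(2) c(3)] RR(3)[OF e(2) c(2) c(3)] by blast
    next
      case False
      then have v: "v = e1" "rord R e2 w" using vw by auto
      show ?thesis
      proof (cases "u = e1")
        case True then show ?thesis using v by blast
      next
        case False
        then have "rord R u e1" using uv v by auto
        then have "rord R u e2" using strict[OF c(1)] False c(4) by blast
        then show ?thesis using RR(3)[OF c(1) e(2) c(3)] v by blast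
      qed
    qed
    then show "rord R2 u w" using R2s by simp
  next
    fix v assume v: "v \<in> carrier R2"
    have "{u \<in> carrier R2. rord R2 u v} \<subseteq> insert e1 {u \<in> carrier R. rord R u v}" using R2s by auto
    moreover have "finite (insert e1 {u \<in> carrier R. rord R u v})" using RR(4) v R2s by auto
    ultimately show "finite {u \<in> carrier R2. rord R2 u v}" by (rule finite_subset)
  next
    fix u assume "u \<in> carrier R2" then show "lab R2 u \<in> \<Union>Fam" using RR(5) R2s by auto
  next
    fix z assume dz: "down_closed R2 z"
    have zc: "z \<subseteq> carrier R - {e2}" and zd: "\<And>v u. v \<in> z \<Longrightarrow> u \<in> carrier R - {e2} \<Longrightarrow>
        rord R u v \<or> (u = e1 \<and> rord R e2 v) \<Longrightarrow> u \<in> z"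
      using dz R2s unfolding down_closed_def by auto
    define P where "P = z \<union> (if e1 \<in> z then {e2} else {})"
    have dP: "down_closed R P" unfolding down_closed_def
    proof (intro conjI ballI impI)
      show "P \<subseteq> carrier R" using zc e unfolding P_def by auto
    next
      fix v u assume v: "v \<in> P" and u: "u \<in> carrier R" "rord R u v"
      show "u \<in> P"
      proof (cases "v \<in> z")
        case True
        show ?thesis
        proof (cases "u = e2")
          case True2: True
          then have "e1 \<in> z" using zd[OF \<open>v \<in> z\<close>, of e1] e u zc inc1 \<open>v\<in>z\<close> by auto
          then show ?thesis unfolding P_def using True2 by auto
        next
          case False
          then show ?thesis using zd[OF True, of u] u unfolding P_def by auto
        qed
      next
        case False
        then have ve: "v = e2" "e1 \<in> z" using v unfolding P_def by (auto split: if_splits)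
        show ?thesis
        proof (cases "u = e2")
          case True then show ?thesis using ve unfolding P_def by auto
        next
          case False
          then have "rord R u e1" using strict[OF u(1)] u ve by auto
          then show ?thesis using zd[OF ve(2), of u] u False unfolding P_def by auto
        qed
      qed
    qed
    have "lab R ` P = lab R ` z" unfolding P_def using lab by (auto simp: image_iff) (metis)
    then show "lab R2 ` z \<in> Fam" using RR(6)[OF dP] R2s by simp
  qed
  define F where "F u = (if u \<in> carrier R then Some (if u = e2 then e1 else u) else None)" for u
  have Fm: "rmap Fam R R2 F" unfolding rmap_def
  proof (intro conjI allI impI ballI)
    show "is_realisation Fam R" by (fact rR)
    show "is_realisation Fam R2" by (fact r2)
  next
    fix u assume "F u \<noteq> None" then show "u \<in> carrier R" unfolding F_def by (auto split: if_splits)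
  next
    fix u y assume "F u = Some y" then show "y \<in> carrier R2" unfolding F_def R2s using e by (auto split: if_splits)
  next
    fix y assume "y \<in> carrier R2" then show "\<exists>u\<in>carrier R. F u = Some y" unfolding F_def R2s
      by (intro bexI[of _ y]) auto
  next
    fix u y assume "F u = Some y" then show "lab R u = lab R2 y" unfolding F_def R2s using lab by (auto split: if_splits)
  next
    fix x assume dx: "down_closed R x"
    have xc: "x \<subseteq> carrier R" and xd: "\<And>v u. v \<in> x \<Longrightarrow> u \<in> carrier R \<Longrightarrow> rord R u v \<Longrightarrow> u \<in> x"
      using dx unfolding down_closed_def by auto
    have img: "{y. \<exists>u\<in>x. F u = Some y} = (x - {e2}) \<union> (if e2 \<in> x then {e1} else {})"
      using xc unfolding F_def by (auto split: if_splits)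
    show "down_closed R2 {y. \<exists>u\<in>x. F u = Some y}" unfolding img down_closed_def R2s
    proof (intro conjI ballI impI)
      show "x - {e2} \<union> (if e2 \<in> x then {e1} else {}) \<subseteq> carrier R - {e2}" using xc e by auto
    next
      fix v u assume v: "v \<in> x - {e2} \<union> (if e2 \<in> x then {e1} else {})" and u: "u \<in> carrier R - {e2}"
        and uv: "rord R u v \<or> u = e1 \<and> rord R e2 v"
      show "u \<in> x - {e2} \<union> (if e2 \<in> x then {e1} else {})"
      proof (cases "v \<in> x - {e2}")
        case True
        show ?thesis
        proof (cases "rord R u v")
          case True2: True then show ?thesis using xd[of v u] True u by auto
        next
          case False
          then have "u = e1" "rord R e2 v" using uv by auto
          then show ?thesis using xd[of v e2] True e by auto
        qed
      next
        case False
        then have ve: "v = e1" "e2 \<in> x" using v by (auto split: if_splits)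
        show ?thesis
        proof (cases "u = e1")
          case True then show ?thesis using ve by auto
        next
          case False
          then have "rord R u e1" using uv ve inc2 by auto
          then have "rord R u e2" using strict[of u] u False by auto
          then show ?thesis using xd[of e2 u] ve u by auto
        qed
      qed
    qed
  qed
  have "total_map R F" unfolding total_map_def F_def by auto
  then have "iso_map R R2 F" using ex Fm unfolding extremal_def by blast
  then obtain H where H: "\<forall>u\<in>carrier R. F u = Some (H u)" "riso_fun R R2 H" unfolding iso_map_def by blast
  have "H e1 = e1" "H e2 = e1" using H(1) e unfolding F_def by auto
  moreover have "inj_on H (carrier R)" using riso_funD(1)[OF H(2)] bij_betw_def by blast
  ultimately show False using e inj_onD by metis
qed



lemma psubsetI': "A \<subseteq> B \<Longrightarrow> x \<notin> A \<Longrightarrow> x \<in> B \<Longrightarrow> A \<subset> B" by blast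

lemma twins_n:
  fixes R :: "('e,'a) real"
  assumes cl: "closedF Fam" and ex: "extremal Fam R"
  shows "\<forall>e1 e2. e1 \<in> carrier R \<and> e2 \<in> carrier R \<and> card {u \<in> carrier R. rord R u e2} = n \<and>
            riso Fam (restr R e1) (restr R e2) \<longrightarrow> e1 = e2"
proof (induction n rule: less_induct)
  case (less n)
  have rR: "is_realisation Fam R" by (rule extremal_real[OF ex])
  note RR = realD[OF rR]
  show ?case
  proof (intro allI impI, elim conjE)
    fix e1 e2 assume e1: "e1 \<in> carrier R" and e2: "e2 \<in> carrier R" and n: "card {u \<in> carrier R. rord R u e2} = n"
      and ri: "riso Fam (restr R e1) (restr R e2)"
    obtain h where h: "riso_fun (restr R e1) (restr R e2) h" using ri unfolding riso_def by blast
    have hb: "bij_betw h {u \<in> carrier R. rord R u e1} {u \<in> carrier R. rord R u e2}"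
      using riso_funD(1)[OF h] by simp
    have ho: "\<And>a b. a \<in> carrier R \<Longrightarrow> rord R a e1 \<Longrightarrow> b \<in> carrier R \<Longrightarrow> rord R b e1 \<Longrightarrow> rord R a b = rord R (h a) (h b)"
      using riso_funD(2)[OF h] by simp
    have hl: "\<And>a. a \<in> carrier R \<Longrightarrow> rord R a e1 \<Longrightarrow> lab R (h a) = lab R a"
      using riso_funD(3)[OF h] by simp
    have hin: "\<And>a. a \<in> carrier R \<Longrightarrow> rord R a e1 \<Longrightarrow> h a \<in> carrier R \<and> rord R (h a) e2"
      using hb bij_betwE by blast
    have himg: "h ` {u \<in> carrier R. rord R u e1} = {u \<in> carrier R. rord R u e2}"
      using bij_betw_imp_surj_on[OF hb] .
    have hsurj: "\<exists>a. a \<in> carrier R \<and> rord R a e1 \<and> h a = b" if b: "b \<in> carrier R" "rord R b e2" for b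
    proof -
      have "b \<in> h ` {u \<in> carrier R. rord R u e1}" using himg b by simp
      then obtain a where "a \<in> {u \<in> carrier R. rord R u e1}" "b = h a" by (rule imageE)
      then show ?thesis by auto
    qed
    have hinj: "inj_on h {u \<in> carrier R. rord R u e1}" using hb bij_betw_def by blast
    have e11: "rord R e1 e1" "rord R e2 e2" using RR(1) e1 e2 by auto
    have he1: "h e1 = e2"
    proof -
      obtain a where a: "a \<in> carrier R" "rord R a e1" "h a = e2" using hsurj[OF e2 e11(2)] by blast
      have "rord R (h a) (h e1)" using ho[OF a(1,2) e1 e11(1)] a(2) by simp
      then have "rord R e2 (h e1)" using a by simp
      moreover have "h e1 \<in> carrier R" "rord R (h e1) e2" using hin[OF e1 e11(1)] by auto
      ultimately show ?thesis using RR(2)[OF _ e2] by blast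
    qed
    have hid: "h u = u" if u: "u \<in> carrier R" "rord R u e1" "u \<noteq> e1" for u
    proof -
      have hu: "h u \<in> carrier R" "rord R (h u) e2" using hin[OF u(1,2)] by auto
      have hne: "h u \<noteq> e2"
      proof
        assume "h u = e2"
        then have "h u = h e1" using he1 by simp
        moreover have "u \<in> {u \<in> carrier R. rord R u e1}" "e1 \<in> {u \<in> carrier R. rord R u e1}" using u e1 e11 by auto
        ultimately have "u = e1" using inj_onD[OF hinj] by blast
        then show False using u by simp
      qed
      have sub: "{w \<in> carrier R. rord R w (h u)} \<subseteq> {w \<in> carrier R. rord R w e2}"
      proof
        fix w assume "w \<in> {w \<in> carrier R. rord R w (h u)}"
        then show "w \<in> {w \<in> carrier R. rord R w e2}" using RR(3)[OF _ hu(1) e2 _ hu(2), of w] by simp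
      qed
      have "\<not> rord R e2 (h u)" using RR(2)[OF hu(1) e2] hu hne by auto
      then have "e2 \<notin> {w \<in> carrier R. rord R w (h u)}" by simp
      moreover have "e2 \<in> {w \<in> carrier R. rord R w e2}" using e2 e11 by simp
      ultimately have psub: "{w \<in> carrier R. rord R w (h u)} \<subset> {w \<in> carrier R. rord R w e2}" by (rule psubsetI'[OF sub])
      have "finite {w \<in> carrier R. rord R w e2}" using RR(4)[OF e2] .
      then have lt: "card {w \<in> carrier R. rord R w (h u)} < n" using psub n psubset_card_mono by blast
      have ri2: "riso_fun (restr R u) (restr R (h u)) h" unfolding riso_fun_def
      proof (intro conjI ballI)
        have "{w \<in> carrier R. rord R w u} \<subseteq> {w \<in> carrier R. rord R w e1}"
        proof
          fix w assume "w \<in> {w \<in> carrier R. rord R w u}"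
          then show "w \<in> {w \<in> carrier R. rord R w e1}" using RR(3)[OF _ u(1) e1 _ u(2), of w] by simp
        qed
        then have inj: "inj_on h {w \<in> carrier R. rord R w u}" by (rule inj_on_subset[OF hinj])
        have "h ` {w \<in> carrier R. rord R w u} = {w \<in> carrier R. rord R w (h u)}"
        proof
          show "h ` {w \<in> carrier R. rord R w u} \<subseteq> {w \<in> carrier R. rord R w (h u)}"
          proof
            fix b assume "b \<in> h ` {w \<in> carrier R. rord R w u}"
            then obtain a where a: "a \<in> carrier R" "rord R a u" "b = h a" by blast
            have ae: "rord R a e1" using RR(3)[OF a(1) u(1) e1 a(2) u(2)] .
            show "b \<in> {w \<in> carrier R. rord R w (h u)}" using hin[OF a(1) ae] ho[OF a(1) ae u(1,2)] a by auto
          qed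
          show "{w \<in> carrier R. rord R w (h u)} \<subseteq> h ` {w \<in> carrier R. rord R w u}"
          proof
            fix b assume b: "b \<in> {w \<in> carrier R. rord R w (h u)}"
            then have "b \<in> carrier R" "rord R b e2" using sub by auto
            then obtain a where a: "a \<in> carrier R" "rord R a e1" "h a = b" using hsurj by blast
            then have "rord R a u" using ho[OF a(1,2) u(1,2)] b by auto
            then show "b \<in> h ` {w \<in> carrier R. rord R w u}" using a by blast
          qed
        qed
        then show "bij_betw h (carrier (restr R u)) (carrier (restr R (h u)))" using inj unfolding bij_betw_def by simp
      next
        fix a b assume "a \<in> carrier (restr R u)" "b \<in> carrier (restr R u)"
        then show "rord (restr R u) a b = rord (restr R (h u)) (h a) (h b)"
          using ho RR(3)[OF _ u(1) e1 _ u(2)] by simp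
      next
        fix a assume "a \<in> carrier (restr R u)"
        then show "lab (restr R (h u)) (h a) = lab (restr R u) a"
          using hl RR(3)[OF _ u(1) e1 _ u(2)] by simp
      qed
      have ri3: "riso Fam (restr R u) (restr R (h u))" unfolding riso_def
        using ri2 restr_real[OF rR u(1)] restr_real[OF rR hu(1)] by blast
      have "u = h u" by (rule less.IH[OF lt, rule_format, OF conjI[OF u(1) conjI[OF hu(1) conjI[OF refl ri3]]]])
      then show "h u = u" by simp
    qed
    have strict: "(u \<noteq> e1 \<and> rord R u e1) \<longleftrightarrow> (u \<noteq> e2 \<and> rord R u e2)" if u: "u \<in> carrier R" for u
    proof
      assume a: "u \<noteq> e1 \<and> rord R u e1"
      then have "h u = u" using hid[OF u] by blast
      moreover have "h u \<noteq> e2"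
      proof
        assume "h u = e2"
        then have "h u = h e1" using he1 by simp
        moreover have "u \<in> {u \<in> carrier R. rord R u e1}" "e1 \<in> {u \<in> carrier R. rord R u e1}" using u e1 e11 a by auto
        ultimately have "u = e1" using inj_onD[OF hinj] by blast
        then show False using a by simp
      qed
      ultimately show "u \<noteq> e2 \<and> rord R u e2" using hin[OF u] a by auto
    next
      assume b: "u \<noteq> e2 \<and> rord R u e2"
      then obtain a where a: "a \<in> carrier R" "rord R a e1" "h a = u" using hsurj u by blast
      have "a \<noteq> e1" using a b he1 by auto
      then have "h a = a" using hid a by blast
      then show "u \<noteq> e1 \<and> rord R u e1" using a \<open>a \<noteq> e1\<close> by auto
    qed
    have "lab R e1 = lab R e2" using hl[OF e1 e11(1)] he1 by simp
    then show "e1 = e2" using merge_contra[OF ex e1 e2 _ _ strict] by blast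
  qed
qed

lemma twins:
  assumes cl: "closedF Fam" and ex: "extremal Fam R" and e: "e1 \<in> carrier R" "e2 \<in> carrier R"
    and ri: "riso Fam (restr R e1) (restr R e2)"
  shows "e1 = e2"
  using twins_n[OF cl ex] e ri by blast



lemma restr_restr: assumes rR: "is_realisation Fam R" and e: "e1 \<in> carrier R" "e2 \<in> carrier R" "rord R e1 e2"
  shows "restr (restr R e2) e1 = restr R e1"
proof -
  have "{u \<in> {u \<in> carrier R. rord R u e2}. rord R u e1} = {u \<in> carrier R. rord R u e1}"
    using realD(3)[OF rR _ e(1) e(2) _ e(3)] by auto
  then show ?thesis unfolding restr_def by simp
qed

lemma nat_copy:
  fixes R :: "('e,'a) real"
  assumes ex: "extremal Fam R" and tR: "has_top R"
  shows "\<exists>Rn :: (nat,'a) real. riso Fam R Rn \<and> extremal Fam Rn \<and> has_top Rn"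
proof -
  have rR: "is_realisation Fam R" by (rule extremal_real[OF ex])
  obtain t where t: "t \<in> carrier R" "\<forall>e\<in>carrier R. rord R e t" using tR unfolding has_top_def by blast
  have "carrier R = {u \<in> carrier R. rord R u t}" using t by auto
  then have "finite (carrier R)" using realD(4)[OF rR t(1)] by simp
  then obtain h where h: "bij_betw h {0..<card (carrier R)} (carrier R)" using ex_bij_betw_nat_finite by blast
  define Rn :: "(nat,'a) real" where "Rn = \<lparr>carrier = {0..<card (carrier R)}, rord = \<lambda>i j. rord R (h i) (h j), lab = \<lambda>i. lab R (h i)\<rparr>"
  have i1: "riso_fun Rn R h" unfolding riso_fun_def Rn_def using h by simp
  have i2: "riso_fun R Rn (inv_into (carrier Rn) h)" by (rule riso_fun_inv[OF i1])
  have rn: "is_realisation Fam Rn" by (rule real_iso[OF i2 rR])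
  have "riso Fam R Rn" unfolding riso_def using i2 rR rn by blast
  moreover have "extremal Fam Rn" by (rule riso_extremal[OF ex i2])
  moreover have "has_top Rn" by (rule riso_top(1)[OF i2 rR tR])
  ultimately show ?thesis by blast
qed

locale erctx =
  fixes Fam :: "'a set set" and P :: "(nat,'a) real set"
  assumes cl: "closedF Fam" and reps: "er_reps Fam P"
begin

lemma P_ext: "p \<in> P \<Longrightarrow> extremal Fam p" and P_top: "p \<in> P \<Longrightarrow> has_top p"
  using reps unfolding er_reps_def by blast+

lemma P_real: "p \<in> P \<Longrightarrow> is_realisation Fam p" using P_ext extremal_real by blast

lemma rep_unique: assumes "p \<in> P" "q \<in> P" "riso Fam p q" shows "p = q"
proof -
  have "\<exists>!p'. p' \<in> P \<and> riso Fam p p'" using reps P_ext[OF assms(1)] P_top[OF assms(1)] unfolding er_reps_def by blast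
  moreover have "riso Fam p p" by (rule riso_refl[OF P_real[OF assms(1)]])
  ultimately show ?thesis using assms by blast
qed

lemma rep_exists:
  fixes R :: "('e,'a) real"
  assumes ex: "extremal Fam R" and tR: "has_top R"
  shows "\<exists>p. p \<in> P \<and> riso Fam R p"
proof -
  obtain Rn :: "(nat,'a) real" where Rn: "riso Fam R Rn" "extremal Fam Rn" "has_top Rn" using nat_copy[OF ex tR] by blast
  then obtain p where "p \<in> P" "riso Fam Rn p" using reps unfolding er_reps_def by blast
  then show ?thesis using riso_trans[OF Rn(1)] by blast
qed

lemma part2:
  fixes R :: "('e,'a) real"
  assumes ex: "extremal Fam R"
  shows "riso Fam R (real_of_config Fam {p\<in>P. rle Fam p R}) \<and> {p\<in>P. rle Fam p R} \<in> configsP Fam P"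
proof -
  have rR: "is_realisation Fam R" by (rule extremal_real[OF ex])
  note RR = realD[OF rR]
  define X where "X = {p\<in>P. rle Fam p R}"
  define rep where "rep e = (SOME p. p \<in> P \<and> riso Fam (restr R e) p)" for e
  have rep: "rep e \<in> P \<and> riso Fam (restr R e) (rep e)" if e: "e \<in> carrier R" for e
  proof -
    have "\<exists>p. p \<in> P \<and> riso Fam (restr R e) p"
      by (rule rep_exists[OF restr_extremal[OF cl ex e] restr_top(1)[OF rR e]])
    then show ?thesis unfolding rep_def by (rule someI_ex)
  qed
  have repc: "p = rep e" if "e \<in> carrier R" "p \<in> P" "riso Fam (restr R e) p" for e p
  proof -
    have "riso Fam p (rep e)" using riso_trans[OF riso_sym[OF that(3)]] rep[OF that(1)] by blast
    then show ?thesis using rep_unique that rep by blast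
  qed
  have Xeq: "X = rep ` carrier R"
  proof
    show "X \<subseteq> rep ` carrier R"
    proof
      fix p assume "p \<in> X"
      then have p: "p \<in> P" "rle Fam p R" unfolding X_def by auto
      then obtain e where "e \<in> carrier R" "riso Fam (restr R e) p"
        using rle_restr_iff[OF cl ex P_ext[OF p(1)] P_top[OF p(1)]] by blast
      then show "p \<in> rep ` carrier R" using repc p by blast
    qed
    show "rep ` carrier R \<subseteq> X"
    proof
      fix p assume "p \<in> rep ` carrier R"
      then obtain e where e: "e \<in> carrier R" "p = rep e" by blast
      have "rle Fam (rep e) R" using rle_restr_iff[OF cl ex P_ext P_top, of "rep e"] rep[OF e(1)] e(1) by blast
      then show "p \<in> X" using e rep unfolding X_def by blast
    qed
  qed
  have ord: "rord R e1 e2 \<longleftrightarrow> rle Fam (rep e1) (rep e2)" if e: "e1 \<in> carrier R" "e2 \<in> carrier R" for e1 e2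
  proof
    assume o: "rord R e1 e2"
    have "rle Fam (restr (restr R e2) e1) (restr R e2)"
      by (rule restr_rle[OF restr_real[OF rR e(2)]]) (use e o in simp)
    then have a: "rle Fam (restr R e1) (restr R e2)" using restr_restr[OF rR e o] by simp
    have b: "rle Fam (rep e1) (restr R e1)" using riso_rle(2) rep[OF e(1)] by blast
    have c: "rle Fam (restr R e2) (rep e2)" using riso_rle(1) rep[OF e(2)] by blast
    show "rle Fam (rep e1) (rep e2)" by (rule rle_trans[OF rle_trans[OF b a] c])
  next
    assume o: "rle Fam (rep e1) (rep e2)"
    have "rle Fam (rep e2) (restr R e2)" using riso_rle(2) rep[OF e(2)] by blast
    then have "rle Fam (rep e1) (restr R e2)" by (rule rle_trans[OF o])
    moreover have "rep e1 \<in> P" using rep[OF e(1)] by blast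
    ultimately obtain e where e': "e \<in> carrier (restr R e2)" "riso Fam (restr (restr R e2) e) (rep e1)"
      using rle_restr_iff[OF cl restr_extremal[OF cl ex e(2)] P_ext P_top] by blast
    have ec: "e \<in> carrier R" "rord R e e2" using e' by auto
    have "restr (restr R e2) e = restr R e" by (rule restr_restr[OF rR ec(1) e(2) ec(2)])
    then have r1: "riso Fam (restr R e) (rep e1)" using e' by simp
    have r2: "riso Fam (rep e1) (restr R e1)" using riso_sym rep[OF e(1)] by blast
    have "riso Fam (restr R e) (restr R e1)" by (rule riso_trans[OF r1 r2])
    then have "e = e1" by (rule twins[OF cl ex ec(1) e(1)])
    then show "rord R e1 e2" using ec by simp
  qed
  have inj: "inj_on rep (carrier R)"
  proof (rule inj_onI)
    fix e1 e2 assume e: "e1 \<in> carrier R" "e2 \<in> carrier R" "rep e1 = rep e2"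
    have r1: "riso Fam (restr R e1) (rep e1)" using rep[OF e(1)] by blast
    have r2: "riso Fam (rep e1) (restr R e2)" using riso_sym[of Fam "restr R e2" "rep e2"] rep[OF e(2)] e(3) by simp
    have "riso Fam (restr R e1) (restr R e2)" by (rule riso_trans[OF r1 r2])
    then show "e1 = e2" by (rule twins[OF cl ex e(1,2)])
  qed
  have lab: "maxA (rep e) = lab R e" if e: "e \<in> carrier R" for e
  proof -
    obtain g where g: "riso_fun (restr R e) (rep e) g" using rep[OF e] unfolding riso_def by blast
    have "maxA (rep e) = maxA (restr R e)" by (rule riso_top(2)[OF g restr_real[OF rR e] restr_top(1)[OF rR e]])
    then show ?thesis using restr_top(2)[OF rR e] by simp
  qed
  have iso: "riso_fun R (real_of_config Fam X) rep" unfolding riso_fun_def real_of_config_def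
    using inj Xeq ord lab by (simp add: bij_betw_def)
  have rX: "is_realisation Fam (real_of_config Fam X)" by (rule real_iso[OF iso rR])
  have 1: "riso Fam R (real_of_config Fam X)" unfolding riso_def using iso rR rX by blast
  have XP: "X \<subseteq> P" unfolding X_def by auto
  have 2: "X \<in> configsP Fam P" unfolding configsP_def
  proof (intro CollectI conjI allI impI ballI)
    show "X \<subseteq> P" unfolding X_def by auto
  next
    fix p p' assume "p \<in> X" "p' \<in> P" "rle Fam p' p"
    then show "p' \<in> X" unfolding X_def using rle_trans by blast
  next
    fix Y assume Y: "finite Y \<and> Y \<subseteq> X"
    define Z where "Z = {u \<in> carrier R. rep u \<in> downP Fam P Y}"
    have dZ: "down_closed R Z" unfolding down_closed_def
    proof (intro conjI ballI impI)
      show "Z \<subseteq> carrier R" unfolding Z_def by auto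
      fix v u assume v: "v \<in> Z" and u: "u \<in> carrier R" "rord R u v"
      then have vc: "v \<in> carrier R" unfolding Z_def by auto
      obtain q where q: "q \<in> Y" "rle Fam (rep v) q" using v unfolding Z_def downP_def by blast
      have "rle Fam (rep u) (rep v)" using ord[OF u(1) vc] u(2) by simp
      then have "rle Fam (rep u) q" using rle_trans q(2) by blast
      then show "u \<in> Z" unfolding Z_def downP_def using u rep q(1) by blast
    qed
    have "downP Fam P Y \<subseteq> X" unfolding downP_def X_def using Y rle_trans unfolding X_def by blast
    then have "downP Fam P Y = rep ` Z" unfolding Z_def using Xeq by blast
    moreover have "maxA ` rep ` Z = lab R ` Z" unfolding image_image using lab by (intro image_cong) (auto simp: Z_def)
    ultimately have "maxA ` downP Fam P Y = lab R ` Z" by simp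
    then show "ConP Fam P Y" unfolding ConP_def using Y XP RR(6)[OF dZ] by auto
  qed
  show ?thesis using 1 2 unfolding X_def by blast
qed

end



context erctx begin

lemma configsP_D: assumes "x \<in> configsP Fam P"
  shows "x \<subseteq> P" "\<And>p p'. p \<in> x \<Longrightarrow> p' \<in> P \<Longrightarrow> rle Fam p' p \<Longrightarrow> p' \<in> x"
    "\<And>X. finite X \<Longrightarrow> X \<subseteq> x \<Longrightarrow> ConP Fam P X"
  using assms unfolding configsP_def by blast+

lemma part2_iso: "p \<in> P \<Longrightarrow> riso Fam p (real_of_config Fam {r\<in>P. rle Fam r p})"
  using part2 P_ext by blast

lemma rle_antisym: assumes p: "p \<in> P" and q: "q \<in> P" and pq: "rle Fam p q" and qp: "rle Fam q p"
  shows "p = q"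
proof -
  have "{r\<in>P. rle Fam r p} = {r\<in>P. rle Fam r q}"
  proof
    show "{r\<in>P. rle Fam r p} \<subseteq> {r\<in>P. rle Fam r q}"
    proof
      fix r assume "r \<in> {r\<in>P. rle Fam r p}"
      then show "r \<in> {r\<in>P. rle Fam r q}" using rle_trans[OF _ pq, of r] by blast
    qed
    show "{r\<in>P. rle Fam r q} \<subseteq> {r\<in>P. rle Fam r p}"
    proof
      fix r assume "r \<in> {r\<in>P. rle Fam r q}"
      then show "r \<in> {r\<in>P. rle Fam r p}" using rle_trans[OF _ qp, of r] by blast
    qed
  qed
  then have "riso Fam p (real_of_config Fam {r\<in>P. rle Fam r q})" using part2_iso[OF p] by simp
  then have "riso Fam p q" using riso_trans riso_sym part2_iso[OF q] by blast
  then show ?thesis using rep_unique p q by blast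
qed

lemma top_finite: assumes "is_realisation Fam R" "has_top R" shows "finite (carrier R)"
proof -
  obtain t where t: "t \<in> carrier R" "\<forall>e\<in>carrier R. rord R e t" using assms(2) unfolding has_top_def by blast
  have "carrier R = {u \<in> carrier R. rord R u t}" using t by auto
  then show ?thesis using realD(4)[OF assms(1) t(1)] by simp
qed

lemma below_finite: assumes p: "p \<in> P" shows "finite {r\<in>P. rle Fam r p}"
proof -
  obtain g where g: "riso_fun p (real_of_config Fam {r\<in>P. rle Fam r p}) g" using part2_iso[OF p] unfolding riso_def by blast
  have "{r\<in>P. rle Fam r p} = g ` carrier p" using bij_betw_imp_surj_on[OF riso_funD(1)[OF g]] by (simp add: real_of_config_def)
  then show ?thesis using top_finite[OF P_real[OF p] P_top[OF p]] by simp
qed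

lemma maxA_in: assumes p: "p \<in> P" shows "maxA p \<in> \<Union>Fam"
proof -
  obtain t where t: "t \<in> carrier p" "\<forall>e\<in>carrier p. rord p e t" using P_top[OF p] unfolding has_top_def by blast
  have "maxA p = lab p t" by (rule maxA_eq[OF P_real[OF p] t])
  then show ?thesis using realD(5)[OF P_real[OF p] t(1)] by simp
qed

lemma config_real: assumes x: "x \<in> configsP Fam P" shows "is_realisation Fam (real_of_config Fam x)"
proof -
  note X = configsP_D[OF x]
  show ?thesis unfolding is_realisation_def real_of_config_def
  proof (simp only: real.select_convs, intro conjI ballI allI impI)
    fix p assume "p \<in> x" then show "rle Fam p p" using rle_refl P_real X(1) by blast
  next
    fix p q assume "p \<in> x" "q \<in> x" "rle Fam p q \<and> rle Fam q p"
    then show "p = q" using rle_antisym X(1) by blast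
  next
    fix p q r assume "p \<in> x" "q \<in> x" "r \<in> x" "rle Fam p q \<and> rle Fam q r"
    then show "rle Fam p r" using rle_trans by blast
  next
    fix p assume p: "p \<in> x"
    have "{e' \<in> x. rle Fam e' p} \<subseteq> {r\<in>P. rle Fam r p}" using X(1) by auto
    moreover have "finite {r\<in>P. rle Fam r p}" using below_finite X(1) p by blast
    ultimately show "finite {e' \<in> x. rle Fam e' p}" by (rule finite_subset)
  next
    fix p assume "p \<in> x" then show "maxA p \<in> \<Union>Fam" using maxA_in X(1) by blast
  next
    fix z assume dz: "down_closed \<lparr>carrier = x, rord = rle Fam, lab = maxA\<rparr> z"
    have zx: "z \<subseteq> x" and zd: "\<And>v u. v \<in> z \<Longrightarrow> u \<in> x \<Longrightarrow> rle Fam u v \<Longrightarrow> u \<in> z"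
      using dz unfolding down_closed_def by auto
    show "maxA ` z \<in> Fam"
    proof (rule closedFI[OF cl])
      fix F assume F: "finite F" "F \<subseteq> maxA ` z"
      then obtain Y where Y: "Y \<subseteq> z" "finite Y" "F = maxA ` Y" by (meson finite_subset_image)
      have "ConP Fam P Y" using X(3)[OF Y(2)] Y(1) zx by blast
      then have W: "maxA ` downP Fam P Y \<in> Fam" unfolding ConP_def by blast
      have "Y \<subseteq> downP Fam P Y" unfolding downP_def using Y(1) zx X(1) rle_refl P_real by blast
      then have "F \<subseteq> maxA ` downP Fam P Y" using Y(3) by blast
      then show "\<exists>W\<in>Fam. F \<subseteq> W" by (rule bexI[OF _ W])
    next
      fix a assume "a \<in> maxA ` z"
      then obtain p where p: "p \<in> z" "a = maxA p" by blast
      have px: "p \<in> x" "p \<in> P" using p zx X(1) by auto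
      have "ConP Fam P {p}" using X(3)[of "{p}"] px by blast
      then have 1: "maxA ` downP Fam P {p} \<in> Fam" unfolding ConP_def by blast
      have "p \<in> downP Fam P {p}" unfolding downP_def using px rle_refl P_real by blast
      then have 3: "a \<in> maxA ` downP Fam P {p}" using p by blast
      have "downP Fam P {p} \<subseteq> z"
      proof
        fix r assume "r \<in> downP Fam P {p}"
        then have r: "r \<in> P" "rle Fam r p" unfolding downP_def by auto
        then have "r \<in> x" using X(2)[OF px(1)] by blast
        then show "r \<in> z" using zd[OF p(1)] r by blast
      qed
      then have 2: "maxA ` downP Fam P {p} \<subseteq> maxA ` z" by (rule image_mono)
      show "\<exists>Y\<in>Fam. a \<in> Y \<and> Y \<subseteq> maxA ` z" by (rule bexI[OF _ 1], rule conjI[OF 3 2])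
    qed
  qed
qed

lemma config_restr: assumes x: "x \<in> configsP Fam P" and q: "q \<in> x"
  shows "restr (real_of_config Fam x) q = real_of_config Fam {r\<in>P. rle Fam r q}"
proof -
  note X = configsP_D[OF x]
  have "{u \<in> x. rle Fam u q} = {r\<in>P. rle Fam r q}" using X(1) X(2)[OF q] by blast
  then show ?thesis unfolding restr_def real_of_config_def by simp
qed

lemma config_restr_iso: assumes x: "x \<in> configsP Fam P" and q: "q \<in> x"
  shows "riso Fam q (restr (real_of_config Fam x) q)" "extremal Fam (restr (real_of_config Fam x) q)"
proof -
  have qP: "q \<in> P" using configsP_D(1)[OF x] q by blast
  show "riso Fam q (restr (real_of_config Fam x) q)" using part2_iso[OF qP] config_restr[OF x q] by simp
  then show "extremal Fam (restr (real_of_config Fam x) q)" using riso_extremal' P_ext[OF qP] by blast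
qed

end


context erctx begin

lemma config_extremal: assumes x: "x \<in> configsP Fam P" shows "extremal Fam (real_of_config Fam x)"
  unfolding extremal_def
proof (intro conjI allI impI)
  define S where "S = real_of_config Fam x"
  have Ss: "carrier S = x" "rord S = rle Fam" "lab S = maxA" unfolding S_def real_of_config_def by simp_all
  note X = configsP_D[OF x]
  have rS: "is_realisation Fam S" unfolding S_def by (rule config_real[OF x])
  then show "is_realisation Fam (real_of_config Fam x)" unfolding S_def .
  fix R' :: "((nat,'a) real, 'a) real" and f
  assume "rmap Fam (real_of_config Fam x) R' f \<and> total_map (real_of_config Fam x) f"
  then have fm: "rmap Fam S R' f" and tot: "total_map S f" unfolding S_def by auto
  note FF = rmapD[OF fm]
  note R'R = realD[OF FF(2)]
  have fS: "f u = Some (the (f u)) \<and> the (f u) \<in> carrier R'" if "u \<in> x" for u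
  proof -
    have "f u \<noteq> None" using tot that Ss unfolding total_map_def by auto
    then obtain y where "f u = Some y" by (cases "f u") auto
    then show ?thesis using FF(4) by auto
  qed
  have loc: "(\<forall>r\<in>x. rle Fam r q \<longrightarrow> rord R' (the (f r)) (the (f q))) \<and>
             riso Fam (restr S q) (restr R' (the (f q))) \<and>
             (\<forall>y\<in>carrier R'. rord R' y (the (f q)) \<longrightarrow> (\<exists>r\<in>x. rle Fam r q \<and> f r = Some y))" if q: "q \<in> x" for q
  proof -
    define fq where "fq = the (f q)"
    have fq: "f q = Some fq" "fq \<in> carrier R'" using fS[OF q] fq_def by auto
    define gq where "gq u = (case f u of None \<Rightarrow> None | Some y \<Rightarrow> (if rord R' y fq \<and> rle Fam u q then Some y else None))" for u
    have gqS: "gq u = Some y \<longleftrightarrow> f u = Some y \<and> rord R' y fq \<and> rle Fam u q" for u y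
      unfolding gq_def by (cases "f u") auto
    have qq: "rle Fam q q" using Ss realD(1)[OF rS] q by metis
    have dq: "down_closed R' {y. \<exists>u\<in>{u \<in> carrier S. rord S u q}. f u = Some y}"
      by (rule FF(6)[OF dc_below[OF rS]]) (use q Ss in simp)
    have gm: "rmap Fam (restr S q) (restr R' fq) gq" unfolding rmap_def
    proof (intro conjI allI impI ballI)
      show "is_realisation Fam (restr S q)" by (rule restr_real[OF rS]) (use q Ss in simp)
      show "is_realisation Fam (restr R' fq)" by (rule restr_real[OF FF(2) fq(2)])
    next
      fix u assume "gq u \<noteq> None"
      then obtain y where "gq u = Some y" by (cases "gq u") auto
      then show "u \<in> carrier (restr S q)" using gqS FF(3) Ss by fastforce
    next
      fix u y assume "gq u = Some y" then show "y \<in> carrier (restr R' fq)" using gqS FF(4) by fastforce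
    next
      fix y assume "y \<in> carrier (restr R' fq)"
      then have y: "y \<in> carrier R'" "rord R' y fq" by auto
      have "fq \<in> {y. \<exists>u\<in>{u \<in> carrier S. rord S u q}. f u = Some y}" using fq q qq Ss by auto
      then have "y \<in> {y. \<exists>u\<in>{u \<in> carrier S. rord S u q}. f u = Some y}"
        using dq y unfolding down_closed_def by meson
      then obtain u where u: "u \<in> carrier S" "rord S u q" "f u = Some y" by blast
      then have "gq u = Some y" using gqS y Ss by auto
      then show "\<exists>u\<in>carrier (restr S q). gq u = Some y" using u by auto
    next
      fix u y assume "gq u = Some y" then show "lab (restr S q) u = lab (restr R' fq) y" using gqS FF(7) by auto
    next
      fix z assume dz: "down_closed (restr S q) z"
      have "down_closed S z" by (rule restr_dc[OF rS _ dz]) (use q Ss in simp)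
      then have "down_closed R' {y. \<exists>u\<in>z. f u = Some y}" by (rule FF(6))
      then have "down_closed (restr R' fq) ({y. \<exists>u\<in>z. f u = Some y} \<inter> {u. rord R' u fq})" by (rule dc_restr)
      moreover have "{y. \<exists>u\<in>z. f u = Some y} \<inter> {u. rord R' u fq} = {y. \<exists>u\<in>z. gq u = Some y}"
        using dz Ss unfolding down_closed_def by (auto simp: gqS)
      ultimately show "down_closed (restr R' fq) {y. \<exists>u\<in>z. gq u = Some y}" by simp
    qed
    have exq: "extremal Fam (restr S q)" using config_restr_iso(2)[OF x q] S_def by simp
    have gqq: "gq q = Some fq" using gqS fq qq R'R(1)[OF fq(2)] by auto
    have qc: "q \<in> carrier (restr S q)" using q qq Ss by simp
    have tot2: "total_map (restr S q) gq" unfolding total_map_def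
    proof
      fix u assume u: "u \<in> carrier (restr S q)"
      then have "rord (restr S q) u q" by simp
      then show "gq u \<noteq> None" using dom_dc[OF cl exq gm qc _ u] gqq by simp
    qed
    have im: "iso_map (restr S q) (restr R' fq) gq" by (rule extremal_any[OF exq gm tot2])
    have 1: "\<forall>r\<in>x. rle Fam r q \<longrightarrow> rord R' (the (f r)) fq"
    proof (intro ballI impI)
      fix r assume r: "r \<in> x" "rle Fam r q"
      then have "gq r \<noteq> None" using tot2 Ss unfolding total_map_def by simp
      then obtain y where "gq r = Some y" by (cases "gq r") auto
      then show "rord R' (the (f r)) fq" using gqS by auto
    qed
    have 2: "riso Fam (restr S q) (restr R' fq)" using im rmapD(1,2)[OF gm] unfolding iso_map_def riso_def by blast
    have 3: "\<forall>y\<in>carrier R'. rord R' y fq \<longrightarrow> (\<exists>r\<in>x. rle Fam r q \<and> f r = Some y)"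
    proof (intro ballI impI)
      fix y assume "y \<in> carrier R'" "rord R' y fq"
      then have "y \<in> carrier (restr R' fq)" by simp
      then obtain r where "r \<in> carrier (restr S q)" "gq r = Some y" using rmapD(5)[OF gm] by blast
      then show "\<exists>r\<in>x. rle Fam r q \<and> f r = Some y" using gqS Ss by auto
    qed
    show ?thesis using 1 2 3 fq_def by simp
  qed
  define g where "g u = the (f u)" for u
  have ginj: "inj_on g x"
  proof (rule inj_onI)
    fix p q assume pq: "p \<in> x" "q \<in> x" "g p = g q"
    have a: "riso Fam (restr S p) (restr R' (g p))" using loc[OF pq(1)] g_def by simp
    have b0: "riso Fam (restr S q) (restr R' (g q))" using loc[OF pq(2)] g_def by simp
    have b: "riso Fam (restr R' (g q)) (restr S q)" by (rule riso_sym[OF b0])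
    have c: "riso Fam (restr S p) (restr S q)" using riso_trans[OF a] b pq(3) by simp
    have d: "riso Fam p (restr S p)" using config_restr_iso(1)[OF x pq(1)] S_def by simp
    have e0: "riso Fam q (restr S q)" using config_restr_iso(1)[OF x pq(2)] S_def by simp
    have "riso Fam p q" by (rule riso_trans[OF riso_trans[OF d c] riso_sym[OF e0]])
    moreover have "p \<in> P" "q \<in> P" using X(1) pq by auto
    ultimately show "p = q" using rep_unique by blast
  qed
  have gsurj: "g ` x = carrier R'"
  proof
    show "g ` x \<subseteq> carrier R'" using fS g_def by auto
    show "carrier R' \<subseteq> g ` x"
    proof
      fix y assume "y \<in> carrier R'"
      then obtain u where u: "u \<in> carrier S" "f u = Some y" using FF(5) by blast
      then have "g u = y" "u \<in> x" using Ss g_def by auto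
      then show "y \<in> g ` x" by blast
    qed
  qed
  have gord: "rle Fam p q \<longleftrightarrow> rord R' (g p) (g q)" if pq: "p \<in> x" "q \<in> x" for p q
  proof
    assume a: "rle Fam p q"
    have "\<forall>r\<in>x. rle Fam r q \<longrightarrow> rord R' (the (f r)) (the (f q))" using loc[OF pq(2)] by simp
    then show "rord R' (g p) (g q)" using a pq(1) g_def by simp
  next
    assume o: "rord R' (g p) (g q)"
    have "g p \<in> carrier R'" using fS[OF pq(1)] g_def by simp
    moreover have "\<forall>y\<in>carrier R'. rord R' y (the (f q)) \<longrightarrow> (\<exists>r\<in>x. rle Fam r q \<and> f r = Some y)"
      using loc[OF pq(2)] by simp
    ultimately have "\<exists>r\<in>x. rle Fam r q \<and> f r = Some (g p)" using o g_def by simp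
    then obtain r where r: "r \<in> x" "rle Fam r q" "f r = Some (g p)" by blast
    then have "g r = g p" using g_def by simp
    then have "r = p" using inj_onD[OF ginj _ r(1) pq(1)] by simp
    then show "rle Fam p q" using r by simp
  qed
  have "riso_fun S R' g" unfolding riso_fun_def
  proof (intro conjI ballI)
    show "bij_betw g (carrier S) (carrier R')" unfolding bij_betw_def Ss using ginj gsurj by simp
  next
    fix p q assume "p \<in> carrier S" "q \<in> carrier S" then show "rord S p q = rord R' (g p) (g q)" using gord Ss by simp
  next
    fix p assume "p \<in> carrier S"
    then have "f p = Some (g p)" using fS g_def Ss by simp
    then show "lab R' (g p) = lab S p" using FF(7) by simp
  qed
  moreover have "\<forall>u\<in>carrier S. f u = Some (g u)" using fS g_def Ss by simp
  ultimately show "iso_map (real_of_config Fam x) R' f" unfolding iso_map_def S_def by blast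
qed

end


context erctx begin

lemma part1_eq: assumes x: "x \<in> configsP Fam P" shows "{p\<in>P. rle Fam p (real_of_config Fam x)} = x"
proof
  define S where "S = real_of_config Fam x"
  have Ss: "carrier S = x" unfolding S_def real_of_config_def by simp
  have exS: "extremal Fam S" unfolding S_def by (rule config_extremal[OF x])
  have rS: "is_realisation Fam S" by (rule extremal_real[OF exS])
  note X = configsP_D[OF x]
  show "x \<subseteq> {p\<in>P. rle Fam p (real_of_config Fam x)}"
  proof
    fix p assume p: "p \<in> x"
    have "rle Fam p (restr S p)" using riso_rle(1) config_restr_iso(1)[OF x p] S_def by blast
    moreover have "rle Fam (restr S p) S" by (rule restr_rle[OF rS]) (use p Ss in simp)
    ultimately have "rle Fam p S" by (rule rle_trans)
    then show "p \<in> {p\<in>P. rle Fam p (real_of_config Fam x)}" using p X(1) S_def by auto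
  qed
  show "{p\<in>P. rle Fam p (real_of_config Fam x)} \<subseteq> x"
  proof
    fix p assume "p \<in> {p\<in>P. rle Fam p (real_of_config Fam x)}"
    then have p: "p \<in> P" "rle Fam p S" unfolding S_def by auto
    then obtain q where q: "q \<in> carrier S" "riso Fam (restr S q) p"
      using rle_restr_iff[OF cl exS P_ext[OF p(1)] P_top[OF p(1)]] by blast
    have qx: "q \<in> x" using q Ss by simp
    have "riso Fam q (restr S q)" using config_restr_iso(1)[OF x qx] S_def by simp
    then have "riso Fam q p" using riso_trans q(2) by blast
    then have "q = p" using rep_unique X(1) qx p(1) by blast
    then show "p \<in> x" using qx by simp
  qed
qed

lemma incl_rle: assumes x: "x \<in> configsP Fam P" and y: "y \<in> configsP Fam P" and xy: "x \<subseteq> y"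
  shows "rle Fam (real_of_config Fam x) (real_of_config Fam y)"
proof -
  define f where "f u = (if u \<in> x then Some u else None)" for u
  have "rmap Fam (real_of_config Fam y) (real_of_config Fam x) f" unfolding rmap_def
  proof (intro conjI allI impI ballI)
    show "is_realisation Fam (real_of_config Fam y)" by (rule config_real[OF y])
    show "is_realisation Fam (real_of_config Fam x)" by (rule config_real[OF x])
  next
    fix z assume dz: "down_closed (real_of_config Fam y) z"
    have zy: "z \<subseteq> y" and zd: "\<And>v u. v \<in> z \<Longrightarrow> u \<in> y \<Longrightarrow> rle Fam u v \<Longrightarrow> u \<in> z"
      using dz unfolding down_closed_def real_of_config_def by auto
    have "{e'. \<exists>e\<in>z. f e = Some e'} = z \<inter> x" unfolding f_def by auto
    moreover have "down_closed (real_of_config Fam x) (z \<inter> x)"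
      unfolding down_closed_def real_of_config_def using zd xy by auto
    ultimately show "down_closed (real_of_config Fam x) {e'. \<exists>e\<in>z. f e = Some e'}" by simp
  qed (use xy in \<open>auto simp: f_def real_of_config_def split: if_splits\<close>)
  then show ?thesis unfolding rle_def by blast
qed

lemma part4: assumes x: "x \<in> configsP Fam P" and y: "y \<in> configsP Fam P"
  shows "x \<subseteq> y \<longleftrightarrow> rle Fam (real_of_config Fam x) (real_of_config Fam y)"
proof
  assume "x \<subseteq> y" then show "rle Fam (real_of_config Fam x) (real_of_config Fam y)" by (rule incl_rle[OF x y])
next
  assume a: "rle Fam (real_of_config Fam x) (real_of_config Fam y)"
  show "x \<subseteq> y"
  proof
    fix p assume "p \<in> x"
    then have "p \<in> {p\<in>P. rle Fam p (real_of_config Fam x)}" using part1_eq[OF x] by simp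
    then have "p \<in> P" "rle Fam p (real_of_config Fam y)" using rle_trans[OF _ a] by auto
    then show "p \<in> y" using part1_eq[OF y] by blast
  qed
qed

lemma part3:
  fixes R :: "('e,'a) real" and R' :: "('f,'a) real"
  assumes ex: "extremal Fam R" and ex': "extremal Fam R'"
  shows "rle Fam R R' \<longleftrightarrow> {p\<in>P. rle Fam p R} \<subseteq> {p\<in>P. rle Fam p R'}"
proof
  assume a: "rle Fam R R'"
  show "{p\<in>P. rle Fam p R} \<subseteq> {p\<in>P. rle Fam p R'}"
  proof
    fix p assume "p \<in> {p\<in>P. rle Fam p R}"
    then show "p \<in> {p\<in>P. rle Fam p R'}" using rle_trans[OF _ a, of p] by auto
  qed
next
  assume a: "{p\<in>P. rle Fam p R} \<subseteq> {p\<in>P. rle Fam p R'}"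
  have A: "riso Fam R (real_of_config Fam {p\<in>P. rle Fam p R})" "{p\<in>P. rle Fam p R} \<in> configsP Fam P"
    using part2[OF ex] by auto
  have B: "riso Fam R' (real_of_config Fam {p\<in>P. rle Fam p R'})" "{p\<in>P. rle Fam p R'} \<in> configsP Fam P"
    using part2[OF ex'] by auto
  have "rle Fam (real_of_config Fam {p\<in>P. rle Fam p R}) (real_of_config Fam {p\<in>P. rle Fam p R'})"
    by (rule incl_rle[OF A(2) B(2) a])
  then have "rle Fam R (real_of_config Fam {p\<in>P. rle Fam p R'})" by (rule rle_trans[OF riso_rle(1)[OF A(1)]])
  then show "rle Fam R R'" by (rule rle_trans[OF _ riso_rle(2)[OF B(1)]])
qed

end

theorem mainTheorem1:
  fixes E :: "'a set" and Con :: "'a set set" and ent :: "'a set \<Rightarrow> 'a \<Rightarrow> bool"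
    and P :: "(nat, 'a) real set"
  assumes "ges E Con ent"
    and "er_reps (configs E Con ent) P"
  shows
    "(\<forall>x \<in> configsP (configs E Con ent) P.
        extremal (configs E Con ent) (real_of_config (configs E Con ent) x) \<and>
        {p\<in>P. rle (configs E Con ent) p (real_of_config (configs E Con ent) x)} = x)
   \<and> (\<forall>R :: ('e, 'a) real. extremal (configs E Con ent) R \<longrightarrow>
        {p\<in>P. rle (configs E Con ent) p R} \<in> configsP (configs E Con ent) P \<and>
        riso (configs E Con ent) R
          (real_of_config (configs E Con ent) {p\<in>P. rle (configs E Con ent) p R}))
   \<and> (\<forall>(R :: ('e, 'a) real) (R' :: ('f, 'a) real).
        extremal (configs E Con ent) R \<and> extremal (configs E Con ent) R' \<longrightarrow>
        (rle (configs E Con ent) R R' \<longleftrightarrow>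
         {p\<in>P. rle (configs E Con ent) p R} \<subseteq> {p\<in>P. rle (configs E Con ent) p R'}))
   \<and> (\<forall>x \<in> configsP (configs E Con ent) P. \<forall>y \<in> configsP (configs E Con ent) P.
        x \<subseteq> y \<longleftrightarrow> rle (configs E Con ent) (real_of_config (configs E Con ent) x)
                                      (real_of_config (configs E Con ent) y))"
proof -
  interpret erctx "configs E Con ent" P
    by unfold_locales (fact closedF_configs, fact assms(2))
  show ?thesis
  proof (intro conjI ballI allI impI)
    fix x assume "x \<in> configsP (configs E Con ent) P"
    then show "extremal (configs E Con ent) (real_of_config (configs E Con ent) x)"
      "{p\<in>P. rle (configs E Con ent) p (real_of_config (configs E Con ent) x)} = x"
      by (rule config_extremal, rule part1_eq)
  next
    fix R :: "('e, 'a) real" assume "extremal (configs E Con ent) R"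
    note pp = part2[OF this]
    show "{p\<in>P. rle (configs E Con ent) p R} \<in> configsP (configs E Con ent) P" using pp by (rule conjunct2)
    show "riso (configs E Con ent) R (real_of_config (configs E Con ent) {p\<in>P. rle (configs E Con ent) p R})"
      using pp by (rule conjunct1)
  next
    fix R :: "('e, 'a) real" and R' :: "('f, 'a) real"
    assume h: "extremal (configs E Con ent) R \<and> extremal (configs E Con ent) R'"
    show "rle (configs E Con ent) R R' \<longleftrightarrow>
         {p\<in>P. rle (configs E Con ent) p R} \<subseteq> {p\<in>P. rle (configs E Con ent) p R'}"
      by (rule part3[OF conjunct1[OF h] conjunct2[OF h]])
  next
    fix x y assume "x \<in> configsP (configs E Con ent) P" "y \<in> configsP (configs E Con ent) P"
    then show "x \<subseteq> y \<longleftrightarrow> rle (configs E Con ent) (real_of_config (configs E Con ent) x)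
                                      (real_of_config (configs E Con ent) y)" by (rule part4)
  qed
qed


end
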